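(* The GePUP-E formulation (described in the context) is equivalent to the incompressible Navier–Stokes equations with no-slip conditions, $\partial_t\mathbf{u}+\mathbf{u}\cdot\nabla\mathbf{u}=\mathbf{g}-\nabla p+\nu\Delta\mathbf{u}$, $\nabla\cdot\mathbf{u}=0$ in $\Omega$, $\mathbf{u}=\mathbf{0}$ on $\partial\Omega$.
   Context: $\Omega\subset\mathbb{R}^D$ is a bounded connected open set with sufficiently smooth boundary, unit outward normal $\mathbf{n}$ and unit tangent vector(s) $\boldsymbol{\tau}$ on $\partial\Omega$. $\nu>0$ is the kinematic viscosity, $\mathbf{g}$ a given body force, $\lambda\ge 0$ a penalty parameter. The Leray–Helmholtz projection $\mathscr{P}$ maps a $C^1$ vector field $\mathbf{v}^*$ to $\mathbf{v}^*-\nabla\phi$ where $\Delta\phi=\nabla\cdot\mathbf{v}^*$ in $\Omega$ and $\mathbf{n}\cdot\nabla\phi=\mathbf{n}\cdot\mathbf{v}^*$ on $\partial\Omega$. The GePUP-E formulation is the system for $(\mathbf{w},\mathbf{u},q)$, where $\mathbf{w}=\mathbf{u}-\nabla\phi$ is a (possibly non-solenoidal) velocity: $\partial_t\mathbf{w}=\mathbf{g}-\mathbf{u}\cdot\nabla\mathbf{u}-\nabla q+\nu\Delta\mathbf{w}$ in $\Omega$; $\mathbf{w}\cdot\boldsymbol{\tau}=0$ and $\nabla\cdot\mathbf{w}=0$ on $\partial\Omega$; $\mathbf{u}=\mathscr{P}\mathbf{w}$ in $\Omega$, $\mathbf{u}\cdot\mathbf{n}=0$ on $\partial\Omega$; $\Delta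 q=\nabla\cdot(\mathbf{g}-\mathbf{u}\cdot\nabla\mathbf{u})$ in $\Omega$; $\mathbf{n}\cdot\nabla q=\mathbf{n}\cdot(\mathbf{g}-\mathbf{u}\cdot\nabla\mathbf{u}+\nu\Delta\mathbf{w})+\lambda\,\mathbf{n}\cdot\mathbf{w}$ on $\partial\Omega$; with initial condition $\mathbf{w}(\mathbf{x},t_0)=\mathbf{u}(\mathbf{x},t_0)$ for all $\mathbf{x}\in\overline{\Omega}$. *)

theory Defs
  imports "HOL-Analysis.Analysis"
begin

fun Ck :: "nat \<Rightarrow> 'a::euclidean_space set \<Rightarrow> ('a \<Rightarrow> 'b::real_normed_vector) \<Rightarrow> bool" where
  "Ck 0 S f = continuous_on S f"
| "Ck (Suc k) S f = ((\<forall>x\<in>S. f differentiable (at x)) \<and>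
      (\<forall>i\<in>Basis. Ck k S (\<lambda>x. frechet_derivative f (at x) i)))"

definition smooth_on_set :: "'a::euclidean_space set \<Rightarrow> ('a \<Rightarrow> 'b::real_normed_vector) \<Rightarrow> bool" where
  "smooth_on_set S f \<longleftrightarrow> (\<forall>k. Ck k S f)"

definition dirD :: "('a::euclidean_space \<Rightarrow> 'b::real_normed_vector) \<Rightarrow> 'a \<Rightarrow> 'a \<Rightarrow> 'b" where
  "dirD f x h = frechet_derivative f (at x) h"

definition grad :: "('a::euclidean_space \<Rightarrow> real) \<Rightarrow> 'a \<Rightarrow> 'a" where
  "grad f x = (\<Sum>i\<in>Basis. dirD f x i *\<^sub>R i)"

definition divg :: "('a::euclidean_space \<Rightarrow> 'a) \<Rightarrow> 'a \<Rightarrow> real" where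
  "divg v x = (\<Sum>i\<in>Basis. dirD v x i \<bullet> i)"

definition lap :: "('a::euclidean_space \<Rightarrow> 'b::real_normed_vector) \<Rightarrow> 'a \<Rightarrow> 'b" where
  "lap f x = (\<Sum>i\<in>Basis. dirD (\<lambda>y. dirD f y i) x i)"

definition conv :: "('a::euclidean_space \<Rightarrow> 'a) \<Rightarrow> ('a \<Rightarrow> 'b::real_normed_vector) \<Rightarrow> 'a \<Rightarrow> 'b" where
  "conv u v x = dirD v x (u x)"

definition dt :: "real \<Rightarrow> real \<Rightarrow> (real \<Rightarrow> 'a \<Rightarrow> 'b::real_normed_vector) \<Rightarrow> real \<Rightarrow> 'a \<Rightarrow> 'b" where
  "dt t0 T w t x = vector_derivative (\<lambda>s. w s x) (at t within {t0..T})"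

definition smooth_boundary_normal :: "'a::euclidean_space set \<Rightarrow> ('a \<Rightarrow> 'a) \<Rightarrow> bool" where
  "smooth_boundary_normal \<Omega> nrm \<longleftrightarrow>
     (\<forall>x\<in>frontier \<Omega>. \<exists>U psi. open U \<and> x \<in> U \<and> smooth_on_set U (psi :: 'a \<Rightarrow> real) \<and>
        (\<forall>y\<in>U. grad psi y \<noteq> 0) \<and> \<Omega> \<inter> U = {y\<in>U. psi y < 0} \<and>
        (\<forall>y\<in>U \<inter> frontier \<Omega>. nrm y = (1 / norm (grad psi y)) *\<^sub>R grad psi y))"

definition leray_proj :: "'a::euclidean_space set \<Rightarrow> ('a \<Rightarrow> 'a) \<Rightarrow> ('a \<Rightarrow> 'a) \<Rightarrow> ('a \<Rightarrow> 'a) \<Rightarrow> bool" where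
  "leray_proj \<Omega> nrm v u \<longleftrightarrow>
     (\<exists>phi :: 'a \<Rightarrow> real. (\<exists>V. open V \<and> closure \<Omega> \<subseteq> V \<and> smooth_on_set V phi) \<and>
        (\<forall>x\<in>\<Omega>. lap phi x = divg v x) \<and>
        (\<forall>x\<in>frontier \<Omega>. nrm x \<bullet> grad phi x = nrm x \<bullet> v x) \<and>
        (\<forall>x\<in>closure \<Omega>. u x = v x - grad phi x))"

definition regular_field :: "real \<Rightarrow> real \<Rightarrow> 'a::euclidean_space set \<Rightarrow> (real \<Rightarrow> 'a \<Rightarrow> 'b::real_normed_vector) \<Rightarrow> bool" where
  "regular_field t0 T \<Omega> f \<longleftrightarrow>
     (\<exists>V. open V \<and> {t0..T} \<times> closure \<Omega> \<subseteq> V \<and> smooth_on_set V (\<lambda>(t,x). f t x))"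

definition GePUP_E ::
  "'a::euclidean_space set \<Rightarrow> ('a \<Rightarrow> 'a) \<Rightarrow> real \<Rightarrow> real \<Rightarrow> (real \<Rightarrow> 'a \<Rightarrow> 'a) \<Rightarrow> real \<Rightarrow> real \<Rightarrow>
   (real \<Rightarrow> 'a \<Rightarrow> 'a) \<Rightarrow> (real \<Rightarrow> 'a \<Rightarrow> 'a) \<Rightarrow> (real \<Rightarrow> 'a \<Rightarrow> real) \<Rightarrow> bool" where
  "GePUP_E \<Omega> nrm \<nu> lam g t0 T w u q \<longleftrightarrow>
     (\<forall>t\<in>{t0..T}.
        (\<forall>x\<in>\<Omega>. dt t0 T w t x = g t x - conv (u t) (u t) x - grad (q t) x + \<nu> *\<^sub>R lap (w t) x) \<and>
        (\<forall>x\<in>frontier \<Omega>. (\<forall>\<tau>. norm \<tau> = 1 \<and> \<tau> \<bullet> nrm x = 0 \<longrightarrow> w t x \<bullet> \<tau> = 0) \<and>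
                          divg (w t) x = 0) \<and>
        leray_proj \<Omega> nrm (w t) (u t) \<and>
        (\<forall>x\<in>frontier \<Omega>. u t x \<bullet> nrm x = 0) \<and>
        (\<forall>x\<in>\<Omega>. lap (q t) x = divg (\<lambda>y. g t y - conv (u t) (u t) y) x) \<and>
        (\<forall>x\<in>frontier \<Omega>. nrm x \<bullet> grad (q t) x =
            nrm x \<bullet> (g t x - conv (u t) (u t) x + \<nu> *\<^sub>R lap (w t) x) + lam * (nrm x \<bullet> w t x))) \<and>
     (\<forall>x\<in>closure \<Omega>. w t0 x = u t0 x)"

definition INSE_noslip ::
  "'a::euclidean_space set \<Rightarrow> real \<Rightarrow> (real \<Rightarrow> 'a \<Rightarrow> 'a) \<Rightarrow> real \<Rightarrow> real \<Rightarrow>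
   (real \<Rightarrow> 'a \<Rightarrow> 'a) \<Rightarrow> (real \<Rightarrow> 'a \<Rightarrow> real) \<Rightarrow> bool" where
  "INSE_noslip \<Omega> \<nu> g t0 T u p \<longleftrightarrow>
     (\<forall>t\<in>{t0..T}.
        (\<forall>x\<in>\<Omega>. dt t0 T u t x + conv (u t) (u t) x = g t x - grad (p t) x + \<nu> *\<^sub>R lap (u t) x) \<and>
        (\<forall>x\<in>\<Omega>. divg (u t) x = 0) \<and>
        (\<forall>x\<in>frontier \<Omega>. u t x = 0))"

end

theory Submission
  imports Defs
begin


lemma smooth_Ck: "smooth_on_set V f \<Longrightarrow> Ck k V f"
  by (simp add: smooth_on_set_def)

lemma smooth_diff: "smooth_on_set V f \<Longrightarrow> x \<in> V \<Longrightarrow> f differentiable (at x)"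
  using smooth_Ck[of V f 1] by simp

lemma smooth_cont: "smooth_on_set V f \<Longrightarrow> continuous_on V f"
  using smooth_Ck[of V f 0] by simp

lemma smooth_D_basis: "smooth_on_set V f \<Longrightarrow> i \<in> Basis \<Longrightarrow>
   smooth_on_set V (\<lambda>x. frechet_derivative f (at x) i)"
  unfolding smooth_on_set_def
  by (metis Ck.simps(2))

lemma Ck_cong: "open V \<Longrightarrow> (\<And>x. x \<in> V \<Longrightarrow> f x = g x) \<Longrightarrow> Ck k V f \<Longrightarrow> Ck k V g"
proof (induction k arbitrary: f g)
  case 0
  then show ?case using continuous_on_cong by (metis Ck.simps(1))
next
  case (Suc k)
  have d: "\<forall>x\<in>V. g differentiable (at x)"
  proof
    fix x assume x: "x \<in> V"
    have "f differentiable (at x)" using Suc.prems x by simp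
    then obtain f' where "(f has_derivative f') (at x)" by (auto simp: differentiable_def)
    then have "(g has_derivative f') (at x)"
      using has_derivative_transform_within_open[of f f' x UNIV V g] Suc.prems x by auto
    then show "g differentiable (at x)" by (auto simp: differentiable_def)
  qed
  have e: "frechet_derivative f (at x) = frechet_derivative g (at x)" if "x \<in> V" for x
    using frechet_derivative_transform_within_open[of f x V g] Suc.prems that by auto
  have "Ck k V (\<lambda>x. frechet_derivative g (at x) i)" if "i \<in> Basis" for i
    using Suc.IH[of "\<lambda>x. frechet_derivative f (at x) i" "\<lambda>x. frechet_derivative g (at x) i"]
      Suc.prems that e by auto
  then show ?case using d by simp
qed

lemma smooth_cong: "open V \<Longrightarrow> (\<And>x. x \<in> V \<Longrightarrow> f x = g x) \<Longrightarrow> smooth_on_set V f \<Longrightarrow> smooth_on_set V g"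
  unfolding smooth_on_set_def using Ck_cong by blast

lemma Ck_linear: "open V \<Longrightarrow> bounded_linear L \<Longrightarrow> Ck k V f \<Longrightarrow> Ck k V (\<lambda>x. L (f x))"
proof (induction k arbitrary: f)
  case 0
  then show ?case
    by (simp add: bounded_linear.continuous_on)
next
  case (Suc k)
  have hd: "((\<lambda>x. L (f x)) has_derivative (\<lambda>h. L (frechet_derivative f (at x) h))) (at x)" if "x \<in> V" for x
    using Suc.prems that
    by (intro bounded_linear.has_derivative[OF Suc.prems(2)]) (auto simp: frechet_derivative_works)
  have d: "\<forall>x\<in>V. (\<lambda>x. L (f x)) differentiable (at x)"
    using hd by (auto simp: differentiable_def)
  have e: "frechet_derivative (\<lambda>x. L (f x)) (at x) i = L (frechet_derivative f (at x) i)" if "x \<in> V" for x i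
    using hd[OF that] frechet_derivative_at by metis
  have "Ck k V (\<lambda>x. frechet_derivative (\<lambda>x. L (f x)) (at x) i)" if "i \<in> Basis" for i
  proof -
    have "Ck k V (\<lambda>x. L (frechet_derivative f (at x) i))"
      using Suc.IH[of "\<lambda>x. frechet_derivative f (at x) i"] Suc.prems that by auto
    then show ?thesis using Ck_cong[OF Suc.prems(1)] e by (metis (no_types, lifting))
  qed
  then show ?case using d by simp
qed

lemma smooth_linear: "open V \<Longrightarrow> bounded_linear L \<Longrightarrow> smooth_on_set V f \<Longrightarrow> smooth_on_set V (\<lambda>x. L (f x))"
  unfolding smooth_on_set_def using Ck_linear by blast

lemma Ck_add: "open V \<Longrightarrow> Ck k V f \<Longrightarrow> Ck k V g \<Longrightarrow> Ck k V (\<lambda>x. f x + g x)"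
proof (induction k arbitrary: f g)
  case 0
  then show ?case by (simp add: continuous_on_add)
next
  case (Suc k)
  have hd: "((\<lambda>x. f x + g x) has_derivative (\<lambda>h. frechet_derivative f (at x) h + frechet_derivative g (at x) h)) (at x)" if "x \<in> V" for x
    using Suc.prems that
    by (intro has_derivative_add) (auto simp: frechet_derivative_works)
  have d: "\<forall>x\<in>V. (\<lambda>x. f x + g x) differentiable (at x)"
    using hd by (auto simp: differentiable_def)
  have e: "frechet_derivative (\<lambda>x. f x + g x) (at x) i = frechet_derivative f (at x) i + frechet_derivative g (at x) i" if "x \<in> V" for x i
    using hd[OF that] frechet_derivative_at by metis
  have "Ck k V (\<lambda>x. frechet_derivative (\<lambda>x. f x + g x) (at x) i)" if "i \<in> Basis" for i
  proof -
    have "Ck k V (\<lambda>x. frechet_derivative f (at x) i + frechet_derivative g (at x) i)"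
      using Suc.IH[of "\<lambda>x. frechet_derivative f (at x) i" "\<lambda>x. frechet_derivative g (at x) i"] Suc.prems that by auto
    then show ?thesis using Ck_cong[OF Suc.prems(1)] e by (metis (no_types, lifting))
  qed
  then show ?case using d by simp
qed

lemma Ck_const: "Ck k V (\<lambda>x. c)"
proof (induction k arbitrary: c)
  case 0 then show ?case by simp
next
  case (Suc k) then show ?case by simp
qed

lemma smooth_const: "smooth_on_set V (\<lambda>x. c)"
  unfolding smooth_on_set_def using Ck_const by blast

lemma smooth_add: "open V \<Longrightarrow> smooth_on_set V f \<Longrightarrow> smooth_on_set V g \<Longrightarrow> smooth_on_set V (\<lambda>x. f x + g x)"
  unfolding smooth_on_set_def using Ck_add by blast

lemma smooth_sum: assumes o: "open V" shows "finite I \<Longrightarrow> (\<And>i. i \<in> I \<Longrightarrow> smooth_on_set V (f i)) \<Longrightarrow> smooth_on_set V (\<lambda>x. \<Sum>i\<in>I. f i x)"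
proof (induction I rule: finite_induct)
  case empty
  then show ?case by (simp add: smooth_const)
next
  case (insert a I)
  then show ?case by (simp add: smooth_add o)
qed

lemma smooth_scaleR: "open V \<Longrightarrow> smooth_on_set V f \<Longrightarrow> smooth_on_set V (\<lambda>x. c *\<^sub>R f x)"
  by (rule smooth_linear) (auto intro: bounded_linear_scaleR_right)

lemma smooth_scaleR_left: "open V \<Longrightarrow> smooth_on_set V (f :: _ \<Rightarrow> real) \<Longrightarrow> smooth_on_set V (\<lambda>x. f x *\<^sub>R c)"
  by (rule smooth_linear[where L = "\<lambda>r. r *\<^sub>R c"]) (auto intro: bounded_linear_scaleR_left)

lemma smooth_inner: "open V \<Longrightarrow> smooth_on_set V f \<Longrightarrow> smooth_on_set V (\<lambda>x. f x \<bullet> c)"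
  by (rule smooth_linear[where L = "\<lambda>r. r \<bullet> c"]) (auto intro: bounded_linear_inner_left)

lemma smooth_minus: "open V \<Longrightarrow> smooth_on_set V f \<Longrightarrow> smooth_on_set V (\<lambda>x. - f x)"
  by (rule smooth_linear[where L = "\<lambda>r. - r"]) (auto intro: bounded_linear_minus bounded_linear_ident)

lemma smooth_diff_fun: "open V \<Longrightarrow> smooth_on_set V f \<Longrightarrow> smooth_on_set V g \<Longrightarrow> smooth_on_set V (\<lambda>x. f x - g x)"
  using smooth_add[of V f "\<lambda>x. - g x"] smooth_minus by fastforce

lemma fd_linear: "f differentiable (at x) \<Longrightarrow> linear (frechet_derivative f (at x))"
  using linear_frechet_derivative by blast

lemma fd_expand: "f differentiable (at x) \<Longrightarrow>
   frechet_derivative f (at x) h = (\<Sum>i\<in>Basis. (h \<bullet> i) *\<^sub>R frechet_derivative f (at x) i)"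
proof -
  assume "f differentiable (at x)"
  then have l: "linear (frechet_derivative f (at x))" by (rule fd_linear)
  have "frechet_derivative f (at x) h = frechet_derivative f (at x) (\<Sum>i\<in>Basis. (h \<bullet> i) *\<^sub>R i)"
    by (simp add: euclidean_representation)
  also have "\<dots> = (\<Sum>i\<in>Basis. (h \<bullet> i) *\<^sub>R frechet_derivative f (at x) i)"
    using l by (simp add: linear_sum linear_scale)
  finally show ?thesis .
qed

lemma smooth_D: "open V \<Longrightarrow> smooth_on_set V f \<Longrightarrow> smooth_on_set V (\<lambda>x. frechet_derivative f (at x) h)"
proof -
  assume o: "open V" and s: "smooth_on_set V f"
  have "smooth_on_set V (\<lambda>x. \<Sum>i\<in>Basis. (h \<bullet> i) *\<^sub>R frechet_derivative f (at x) i)"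
    by (rule smooth_sum[OF o]) (auto intro!: smooth_scaleR[OF o] smooth_D_basis[OF s])
  then show ?thesis
    by (rule smooth_cong[OF o, rotated]) (metis fd_expand smooth_diff[OF s])
qed


lemma fd_at: "(f has_derivative f') (at x) \<Longrightarrow> frechet_derivative f (at x) h = f' h"
  using frechet_derivative_at by metis

lemma fd_works: "f differentiable (at x) \<Longrightarrow> (f has_derivative frechet_derivative f (at x)) (at x)"
  using frechet_derivative_works by blast

lemma fd_lin: "bounded_linear L \<Longrightarrow> f differentiable (at x) \<Longrightarrow>
   frechet_derivative (\<lambda>y. L (f y)) (at x) h = L (frechet_derivative f (at x) h)"
  by (rule fd_at, rule bounded_linear.has_derivative) (auto simp: fd_works)

lemma diff_lin: "bounded_linear L \<Longrightarrow> f differentiable (at x) \<Longrightarrow> (\<lambda>y. L (f y)) differentiable (at x)"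
  unfolding differentiable_def using bounded_linear.has_derivative by blast

lemma fd_add: "f differentiable (at x) \<Longrightarrow> g differentiable (at x) \<Longrightarrow>
   frechet_derivative (\<lambda>y. f y + g y) (at x) h = frechet_derivative f (at x) h + frechet_derivative g (at x) h"
  by (rule fd_at, rule has_derivative_add) (auto simp: fd_works)

lemma fd_diff: "f differentiable (at x) \<Longrightarrow> g differentiable (at x) \<Longrightarrow>
   frechet_derivative (\<lambda>y. f y - g y) (at x) h = frechet_derivative f (at x) h - frechet_derivative g (at x) h"
  by (rule fd_at, rule has_derivative_diff) (auto simp: fd_works)

lemma fd_sum: "finite I \<Longrightarrow> (\<And>i. i \<in> I \<Longrightarrow> f i differentiable (at x)) \<Longrightarrow>
   frechet_derivative (\<lambda>y. \<Sum>i\<in>I. f i y) (at x) h = (\<Sum>i\<in>I. frechet_derivative (f i) (at x) h)"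
  by (rule fd_at, rule has_derivative_sum) (auto simp: fd_works)

lemma diff_sum: "finite I \<Longrightarrow> (\<And>i. i \<in> I \<Longrightarrow> f i differentiable (at x)) \<Longrightarrow>
   (\<lambda>y. \<Sum>i\<in>I. f i y) differentiable (at x)"
  by (induction I rule: finite_induct) auto

lemma fd_scaleR: "f differentiable (at x) \<Longrightarrow>
   frechet_derivative (\<lambda>y. c *\<^sub>R f y) (at x) h = c *\<^sub>R frechet_derivative f (at x) h"
  using fd_lin[of "\<lambda>v. c *\<^sub>R v" f x h] bounded_linear_scaleR_right by blast

lemma fd_scaleR_left: "(f :: _ \<Rightarrow> real) differentiable (at x) \<Longrightarrow>
   frechet_derivative (\<lambda>y. f y *\<^sub>R c) (at x) h = frechet_derivative f (at x) h *\<^sub>R c"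
  using fd_lin[of "\<lambda>v. v *\<^sub>R c" f x h] bounded_linear_scaleR_left by blast

lemma fd_inner: "f differentiable (at x) \<Longrightarrow>
   frechet_derivative (\<lambda>y. f y \<bullet> c) (at x) h = frechet_derivative f (at x) h \<bullet> c"
  using fd_lin[of "\<lambda>v. v \<bullet> c" f x h] bounded_linear_inner_left by blast

lemma fd_minus: "f differentiable (at x) \<Longrightarrow>
   frechet_derivative (\<lambda>y. - f y) (at x) h = - frechet_derivative f (at x) h"
  using fd_lin[of "\<lambda>v. - v" f x h] bounded_linear_minus[OF bounded_linear_ident] by auto

lemma fd_cong: "open S \<Longrightarrow> x \<in> S \<Longrightarrow> (\<And>y. y \<in> S \<Longrightarrow> f y = g y) \<Longrightarrow> g differentiable (at x) \<Longrightarrow>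
   frechet_derivative f (at x) = frechet_derivative g (at x)"
  using frechet_derivative_transform_within_open[of g x S f] by auto

lemma diff_cong: "open S \<Longrightarrow> x \<in> S \<Longrightarrow> (\<And>y. y \<in> S \<Longrightarrow> f y = g y) \<Longrightarrow> g differentiable (at x) \<Longrightarrow>
   f differentiable (at x)"
  unfolding differentiable_def
  using has_derivative_transform_within_open[of g _ x UNIV S f] by auto

lemma fd_lin_dir: "f differentiable (at x) \<Longrightarrow> frechet_derivative f (at x) (a + b) = frechet_derivative f (at x) a + frechet_derivative f (at x) b"
  using fd_linear linear_add by blast

lemma fd_scale_dir: "f differentiable (at x) \<Longrightarrow> frechet_derivative f (at x) (c *\<^sub>R a) = c *\<^sub>R frechet_derivative f (at x) a"
  using fd_linear linear_scale by blast

lemma fd_zero_dir: "f differentiable (at x) \<Longrightarrow> frechet_derivative f (at x) 0 = 0"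
  using fd_linear linear_0 by blast

lemma line_deriv: "f differentiable (at (x + s *\<^sub>R h)) \<Longrightarrow>
  ((\<lambda>r. f (x + r *\<^sub>R h)) has_vector_derivative frechet_derivative f (at (x + s *\<^sub>R h)) h) (at s)"
proof -
  assume d: "f differentiable (at (x + s *\<^sub>R h))"
  have l: "((\<lambda>r. x + r *\<^sub>R h) has_derivative (\<lambda>r. r *\<^sub>R h)) (at s)"
    by (auto intro!: derivative_eq_intros)
  have "((\<lambda>r. f (x + r *\<^sub>R h)) has_derivative (\<lambda>r. frechet_derivative f (at (x + s *\<^sub>R h)) (r *\<^sub>R h))) (at s)"
    using has_derivative_compose[OF l fd_works[OF d]] by simp
  then show ?thesis unfolding has_vector_derivative_def
    using fd_scale_dir[OF d] by simp
qed

lemma line_deriv_real: "(f :: _ \<Rightarrow> real) differentiable (at (x + s *\<^sub>R h)) \<Longrightarrow>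
  ((\<lambda>r. f (x + r *\<^sub>R h)) has_real_derivative frechet_derivative f (at (x + s *\<^sub>R h)) h) (at s)"
  using line_deriv has_real_derivative_iff_has_vector_derivative by blast

section \<open>Symmetry of second derivatives\<close>

lemma schwarz_aux:
  fixes f :: "'c::euclidean_space \<Rightarrow> real"
  assumes o: "open V" and s: "smooth_on_set V f" and bV: "ball x \<delta> \<subseteq> V"
    and h: "0 < h" "h * (norm a + norm b) < \<delta>"
  shows "\<exists>p\<in>cball x (h * (norm a + norm b)).
    f (x + h *\<^sub>R a + h *\<^sub>R b) - f (x + h *\<^sub>R a) - f (x + h *\<^sub>R b) + f x =
    h * h * frechet_derivative (\<lambda>p. frechet_derivative f (at p) a) (at p) b"
proof -
  let ?r = "h * (norm a + norm b)"
  have inV: "x + s *\<^sub>R a + r *\<^sub>R b \<in> V" if "0 \<le> s" "s \<le> h" "0 \<le> r" "r \<le> h" for s r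
  proof -
    have "norm (s *\<^sub>R a + r *\<^sub>R b) \<le> s * norm a + r * norm b"
      using norm_triangle_ineq[of "s *\<^sub>R a" "r *\<^sub>R b"] that by simp
    also have "\<dots> \<le> h * norm a + h * norm b"
      using that by (intro add_mono mult_right_mono) auto
    finally have "norm (s *\<^sub>R a + r *\<^sub>R b) < \<delta>" using h by (simp add: algebra_simps)
    moreover have "dist x (x + s *\<^sub>R a + r *\<^sub>R b) = norm (s *\<^sub>R a + r *\<^sub>R b)"
      by (metis add.assoc add_diff_cancel_left' dist_commute dist_norm)
    ultimately have "x + s *\<^sub>R a + r *\<^sub>R b \<in> ball x \<delta>"
      by simp
    then show ?thesis using bV by auto
  qed
  have incb: "x + s *\<^sub>R a + r *\<^sub>R b \<in> cball x ?r" if "0 \<le> s" "s \<le> h" "0 \<le> r" "r \<le> h" for s r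
  proof -
    have "norm (s *\<^sub>R a + r *\<^sub>R b) \<le> s * norm a + r * norm b"
      using norm_triangle_ineq[of "s *\<^sub>R a" "r *\<^sub>R b"] that by simp
    also have "\<dots> \<le> h * norm a + h * norm b"
      using that by (intro add_mono mult_right_mono) auto
    finally have "norm (s *\<^sub>R a + r *\<^sub>R b) \<le> ?r" by (simp add: algebra_simps)
    moreover have "dist x (x + s *\<^sub>R a + r *\<^sub>R b) = norm (s *\<^sub>R a + r *\<^sub>R b)"
      by (metis add.assoc add_diff_cancel_left' dist_commute dist_norm)
    ultimately show ?thesis by simp
  qed
  define g where "g s = f (x + h *\<^sub>R b + s *\<^sub>R a) - f (x + s *\<^sub>R a)" for s
  define g' where "g' s = frechet_derivative f (at (x + h *\<^sub>R b + s *\<^sub>R a)) a - frechet_derivative f (at (x + s *\<^sub>R a)) a" for s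
  have gd: "(g has_real_derivative g' s) (at s)" if "0 \<le> s" "s \<le> h" for s
  proof -
    have d1: "f differentiable (at (x + h *\<^sub>R b + s *\<^sub>R a))"
      using smooth_diff[OF s inV[of s h]] that h by (simp add: algebra_simps)
    have d2: "f differentiable (at (x + s *\<^sub>R a))"
      using smooth_diff[OF s inV[of s 0]] that h by (simp add: algebra_simps)
    show ?thesis unfolding g_def g'_def
      by (intro DERIV_diff line_deriv_real d1 d2)
  qed
  obtain \<xi> where \<xi>: "0 < \<xi>" "\<xi> < h" "g h - g 0 = (h - 0) * g' \<xi>"
    using MVT2[of 0 h g g'] gd h by auto
  define k where "k r = frechet_derivative f (at (x + \<xi> *\<^sub>R a + r *\<^sub>R b)) a" for r
  define k' where "k' r = frechet_derivative (\<lambda>p. frechet_derivative f (at p) a) (at (x + \<xi> *\<^sub>R a + r *\<^sub>R b)) b" for r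
  have sa: "smooth_on_set V (\<lambda>p. frechet_derivative f (at p) a)" by (rule smooth_D[OF o s])
  have kd: "(k has_real_derivative k' r) (at r)" if "0 \<le> r" "r \<le> h" for r
    unfolding k_def k'_def
    by (rule line_deriv_real, rule smooth_diff[OF sa inV]) (use that \<xi> in auto)
  obtain \<eta> where \<eta>: "0 < \<eta>" "\<eta> < h" "k h - k 0 = (h - 0) * k' \<eta>"
    using MVT2[of 0 h k k'] kd h by auto
  have "g' \<xi> = k h - k 0" unfolding g'_def k_def by (simp add: algebra_simps)
  then have "g h - g 0 = h * h * k' \<eta>" using \<xi> \<eta> by simp
  moreover have "g h - g 0 = f (x + h *\<^sub>R a + h *\<^sub>R b) - f (x + h *\<^sub>R a) - f (x + h *\<^sub>R b) + f x"
    unfolding g_def by (simp add: algebra_simps)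
  ultimately show ?thesis
    using incb[of \<xi> \<eta>] \<xi> \<eta> unfolding k'_def by (metis less_eq_real_def)
qed

lemma schwarz_real:
  fixes f :: "'c::euclidean_space \<Rightarrow> real"
  assumes o: "open V" and s: "smooth_on_set V f" and x: "x \<in> V"
  shows "frechet_derivative (\<lambda>p. frechet_derivative f (at p) a) (at x) b =
         frechet_derivative (\<lambda>p. frechet_derivative f (at p) b) (at x) a"
proof (rule ccontr)
  let ?F1 = "\<lambda>p. frechet_derivative (\<lambda>p. frechet_derivative f (at p) a) (at p) b"
  let ?F2 = "\<lambda>p. frechet_derivative (\<lambda>p. frechet_derivative f (at p) b) (at p) a"
  assume ne: "?F1 x \<noteq> ?F2 x"
  define e where "e = \<bar>?F1 x - ?F2 x\<bar> / 2"
  have e: "e > 0" using ne by (simp add: e_def)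
  have c1: "continuous_on V ?F1" by (intro smooth_cont smooth_D o smooth_D[OF o s])
  have c2: "continuous_on V ?F2" by (intro smooth_cont smooth_D o smooth_D[OF o s])
  obtain \<rho>1 where r1: "\<rho>1 > 0" "\<forall>y\<in>V. dist y x < \<rho>1 \<longrightarrow> dist (?F1 y) (?F1 x) < e"
    using c1 x e unfolding continuous_on_iff by blast
  obtain \<rho>2 where r2: "\<rho>2 > 0" "\<forall>y\<in>V. dist y x < \<rho>2 \<longrightarrow> dist (?F2 y) (?F2 x) < e"
    using c2 x e unfolding continuous_on_iff by blast
  obtain \<delta> where d: "\<delta> > 0" "ball x \<delta> \<subseteq> V" using o x open_contains_ball by blast
  define m where "m = min \<delta> (min \<rho>1 \<rho>2)"
  have m: "m > 0" "m \<le> \<delta>" "m \<le> \<rho>1" "m \<le> \<rho>2" using d r1 r2 by (auto simp: m_def)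
  define h where "h = m / (2 * (norm a + norm b + 1))"
  have np: "norm a + norm b + 1 > 0" using norm_ge_zero[of a] norm_ge_zero[of b] by linarith
  then have hpos: "h > 0" using m unfolding h_def by (intro divide_pos_pos) auto
  have hm: "h * (norm a + norm b) < m"
  proof -
    have "h * (norm a + norm b) \<le> h * (norm a + norm b + 1)" using hpos by simp
    also have "\<dots> = m / 2" unfolding h_def using np by (simp add: field_simps)
    finally show ?thesis using m by simp
  qed
  obtain p1 where p1: "p1 \<in> cball x (h * (norm a + norm b))"
    "f (x + h *\<^sub>R a + h *\<^sub>R b) - f (x + h *\<^sub>R a) - f (x + h *\<^sub>R b) + f x = h * h * ?F1 p1"
    using schwarz_aux[OF o s d(2) hpos, of a b] hm m by auto
  obtain p2 where p2: "p2 \<in> cball x (h * (norm b + norm a))"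
    "f (x + h *\<^sub>R b + h *\<^sub>R a) - f (x + h *\<^sub>R b) - f (x + h *\<^sub>R a) + f x = h * h * ?F2 p2"
    using schwarz_aux[OF o s d(2) hpos, of b a] hm m by (auto simp: add.commute)
  have "h * h * ?F1 p1 = h * h * ?F2 p2" using p1(2) p2(2) by (simp add: algebra_simps)
  then have eq: "?F1 p1 = ?F2 p2" using hpos by simp
  have dp1: "dist p1 x < m" using p1(1) hm by (simp add: dist_commute)
  have "p1 \<in> V" using d(2) dp1 m by (auto simp: dist_commute)
  then have q1: "dist (?F1 p1) (?F1 x) < e" using r1 m dp1 by auto
  have dp2: "dist p2 x < m" using p2(1) hm by (simp add: dist_commute add.commute)
  have "p2 \<in> V" using d(2) dp2 m by (auto simp: dist_commute)
  then have q2: "dist (?F2 p2) (?F2 x) < e" using r2 m dp2 by auto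
  from q1 q2 show False using eq unfolding e_def dist_real_def by argo
qed

lemma schwarz:
  fixes f :: "'c::euclidean_space \<Rightarrow> 'b::euclidean_space"
  assumes o: "open V" and s: "smooth_on_set V f" and x: "x \<in> V"
  shows "frechet_derivative (\<lambda>p. frechet_derivative f (at p) a) (at x) b =
         frechet_derivative (\<lambda>p. frechet_derivative f (at p) b) (at x) a"
proof (rule euclidean_eqI)
  fix e :: 'b assume e: "e \<in> Basis"
  have key: "frechet_derivative (\<lambda>p. frechet_derivative f (at p) a) (at x) b \<bullet> e =
     frechet_derivative (\<lambda>p. frechet_derivative (\<lambda>q. f q \<bullet> e) (at p) a) (at x) b" for a b
  proof -
    have sa: "smooth_on_set V (\<lambda>p. frechet_derivative f (at p) a)" by (rule smooth_D[OF o s])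
    have "frechet_derivative (\<lambda>p. frechet_derivative f (at p) a) (at x) b \<bullet> e =
          frechet_derivative (\<lambda>p. frechet_derivative f (at p) a \<bullet> e) (at x) b"
      using fd_inner[OF smooth_diff[OF sa x]] by simp
    also have "\<dots> = frechet_derivative (\<lambda>p. frechet_derivative (\<lambda>q. f q \<bullet> e) (at p) a) (at x) b"
    proof -
      have "frechet_derivative (\<lambda>p. frechet_derivative (\<lambda>q. f q \<bullet> e) (at p) a) (at x) =
            frechet_derivative (\<lambda>p. frechet_derivative f (at p) a \<bullet> e) (at x)"
        by (rule fd_cong[OF o x]) (auto simp: fd_inner smooth_diff[OF s] intro: smooth_diff[OF smooth_inner[OF o sa]] x)
      then show ?thesis by simp
    qed
    finally show ?thesis .
  qed
  show "frechet_derivative (\<lambda>p. frechet_derivative f (at p) a) (at x) b \<bullet> e =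
        frechet_derivative (\<lambda>p. frechet_derivative f (at p) b) (at x) a \<bullet> e"
    unfolding key using schwarz_real[OF o smooth_inner[OF o s] x] by simp
qed


definition pd :: "('c::real_normed_vector \<Rightarrow> 'b::real_normed_vector) \<Rightarrow> 'c \<Rightarrow> 'c \<Rightarrow> 'b" where
  "pd F a p = frechet_derivative F (at p) a"

lemma open_slice: fixes V :: "('a::topological_space \<times> 'b::topological_space) set"
  shows "open V \<Longrightarrow> open {y. (t, y) \<in> V}"
proof -
  assume o: "open V"
  have "{y. (t, y) \<in> V} = (\<lambda>y. (t, y)) -` V" by auto
  moreover have "open ((\<lambda>y. (t, y)) -` V)"
  proof -
    have "continuous_on UNIV (Pair t)" by (intro continuous_intros)
    then show ?thesis using o open_vimage by blast
  qed
  ultimately show ?thesis by simp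
qed

lemma slice_hasderiv: "F differentiable (at (t, x)) \<Longrightarrow>
   ((\<lambda>y. F (t, y)) has_derivative (\<lambda>h. frechet_derivative F (at (t, x)) (0, h))) (at x)"
proof -
  assume d: "F differentiable (at (t, x))"
  have l: "((\<lambda>y. (t, y)) has_derivative (\<lambda>h. (0, h))) (at x)"
    by (auto intro!: derivative_eq_intros)
  show ?thesis using has_derivative_compose[OF l fd_works[OF d]] by simp
qed

lemma slice_diff: "F differentiable (at (t, x)) \<Longrightarrow> (\<lambda>y. F (t, y)) differentiable (at x)"
  using slice_hasderiv unfolding differentiable_def by blast

lemma slice_fd: "F differentiable (at (t, x)) \<Longrightarrow>
   frechet_derivative (\<lambda>y. F (t, y)) (at x) h = pd F (0, h) (t, x)"
  unfolding pd_def using slice_hasderiv fd_at by blast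

lemma time_vd: "F differentiable (at (t, x)) \<Longrightarrow>
   ((\<lambda>s. F (s, x)) has_vector_derivative pd F (1, 0) (t, x)) (at t)"
proof -
  assume d: "F differentiable (at (t, x))"
  have l: "((\<lambda>s. (s, x)) has_derivative (\<lambda>s. (s, 0))) (at t)"
    by (auto intro!: derivative_eq_intros)
  have "((\<lambda>s. F (s, x)) has_derivative (\<lambda>s. frechet_derivative F (at (t, x)) (s, 0))) (at t)"
    using has_derivative_compose[OF l fd_works[OF d]] by simp
  moreover have "frechet_derivative F (at (t, x)) (s, 0) = s *\<^sub>R pd F (1, 0) (t, x)" for s
    using fd_scale_dir[OF d, of s "(1, 0)"] by (simp add: pd_def)
  ultimately show ?thesis unfolding has_vector_derivative_def by simp
qed

lemma time_rd: "(F :: real \<times> 'a::real_normed_vector \<Rightarrow> real) differentiable (at (t, x)) \<Longrightarrow>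
   ((\<lambda>s. F (s, x)) has_real_derivative pd F (1, 0) (t, x)) (at t)"
  using time_vd has_real_derivative_iff_has_vector_derivative by blast

lemma smooth_pd: "open V \<Longrightarrow> smooth_on_set V F \<Longrightarrow> smooth_on_set V (pd F a)"
proof -
  assume "open V" "smooth_on_set V F"
  then have "smooth_on_set V (\<lambda>p. frechet_derivative F (at p) a)" by (rule smooth_D)
  then show ?thesis by (simp add: pd_def[abs_def])
qed

lemma smooth_pd_diff: "open V \<Longrightarrow> smooth_on_set V F \<Longrightarrow> p \<in> V \<Longrightarrow> pd F a differentiable (at p)"
  using smooth_diff smooth_pd by blast

lemma pd_schwarz: "open V \<Longrightarrow> smooth_on_set V (F :: 'c::euclidean_space \<Rightarrow> 'b::euclidean_space) \<Longrightarrow> p \<in> V \<Longrightarrow>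
  pd (pd F a) b p = pd (pd F b) a p"
  unfolding pd_def[abs_def] using schwarz by blast

lemma pd_cong: "open S \<Longrightarrow> p \<in> S \<Longrightarrow> (\<And>y. y \<in> S \<Longrightarrow> F y = G y) \<Longrightarrow> G differentiable (at p) \<Longrightarrow>
  pd F a p = pd G a p"
  unfolding pd_def using fd_cong by metis

lemma pd_cong_fun: "open S \<Longrightarrow> smooth_on_set S G \<Longrightarrow> (\<And>y. y \<in> S \<Longrightarrow> F y = G y) \<Longrightarrow> y \<in> S \<Longrightarrow>
  pd F a y = pd G a y"
  using pd_cong smooth_diff by metis

lemma second_deriv_max:
  fixes h h' :: "real \<Rightarrow> real"
  assumes d: "0 < \<delta>" and hd: "\<And>r. \<bar>r\<bar> < \<delta> \<Longrightarrow> (h has_real_derivative h' r) (at r)"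
    and h'd: "(h' has_real_derivative c) (at 0)"
    and mx: "\<And>r. \<bar>r\<bar> < \<delta> \<Longrightarrow> h r \<le> h 0"
  shows "c \<le> 0"
proof (rule ccontr)
  assume "\<not> c \<le> 0"
  then have c: "c > 0" by simp
  have h0: "h' 0 = 0"
    by (rule DERIV_local_max[OF hd[of 0] d]) (use d mx in auto)
  obtain e where e: "e > 0" "\<forall>r>0. r < e \<longrightarrow> h' 0 < h' (0 + r)"
    using DERIV_pos_inc_right[OF h'd c] by blast
  define r where "r = min e \<delta> / 2"
  have r: "0 < r" "r < e" "r < \<delta>" using e d by (auto simp: r_def)
  obtain z where z: "0 < z" "z < r" "h r - h 0 = (r - 0) * h' z"
    using MVT2[of 0 r h h'] r hd by auto
  have "h' z > 0" using e(2) z r h0 by auto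
  then have "r * h' z > 0" using z r by (simp add: mult_pos_pos)
  then have "h r > h 0" using z(3) by simp
  moreover have "h r \<le> h 0" using mx r by auto
  ultimately show False by simp
qed


lemma wt_slice: "w t = (\<lambda>y. case_prod w (t, y))" by simp

lemma slice_open_mem: "(t, x) \<in> V \<Longrightarrow> x \<in> {y. (t, y) \<in> V}" by simp

lemma dirD_slice: "H differentiable (at (t, x)) \<Longrightarrow> dirD (\<lambda>y. H (t, y)) x h = pd H (0, h) (t, x)"
  unfolding dirD_def using slice_fd by blast

lemma dirD_cong: "open S \<Longrightarrow> x \<in> S \<Longrightarrow> (\<And>y. y \<in> S \<Longrightarrow> f y = g y) \<Longrightarrow> g differentiable (at x) \<Longrightarrow>
  dirD f x h = dirD g x h"
  unfolding dirD_def using fd_cong by metis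

lemma divg_cong: "open S \<Longrightarrow> x \<in> S \<Longrightarrow> (\<And>y. y \<in> S \<Longrightarrow> f y = g y) \<Longrightarrow> g differentiable (at x) \<Longrightarrow>
  divg f x = divg g x"
  unfolding divg_def using dirD_cong by (metis (no_types, lifting))

lemma grad_cong: "open S \<Longrightarrow> x \<in> S \<Longrightarrow> (\<And>y. y \<in> S \<Longrightarrow> f y = g y) \<Longrightarrow> g differentiable (at x) \<Longrightarrow>
  grad f x = grad g x"
  unfolding grad_def using dirD_cong by (metis (no_types, lifting))

lemma lap_cong: "open S \<Longrightarrow> x \<in> S \<Longrightarrow> (\<And>y. y \<in> S \<Longrightarrow> f y = g y) \<Longrightarrow> (\<And>y. y \<in> S \<Longrightarrow> g differentiable (at y)) \<Longrightarrow>
  (\<And>i. i \<in> Basis \<Longrightarrow> (\<lambda>y. dirD g y i) differentiable (at x)) \<Longrightarrow>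
  lap f x = lap g x"
proof -
  assume o: "open S" and x: "x \<in> S" and e: "\<And>y. y \<in> S \<Longrightarrow> f y = g y"
    and d: "\<And>y. y \<in> S \<Longrightarrow> g differentiable (at y)"
    and d2: "\<And>i. i \<in> Basis \<Longrightarrow> (\<lambda>y. dirD g y i) differentiable (at x)"
  have "dirD (\<lambda>y. dirD f y i) x i = dirD (\<lambda>y. dirD g y i) x i" if "i \<in> Basis" for i
    by (rule dirD_cong[OF o x _ d2[OF that]]) (rule dirD_cong[OF o _ e d]; simp)
  then show ?thesis unfolding lap_def by simp
qed

context
  fixes V :: "(real \<times> 'a::euclidean_space) set" and H :: "real \<times> 'a \<Rightarrow> 'b::euclidean_space"
  assumes o: "open V" and s: "smooth_on_set V H"
begin

lemma sl_diff: "(t, x) \<in> V \<Longrightarrow> (\<lambda>y. H (t, y)) differentiable (at x)"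
  using slice_diff smooth_diff[OF s] by blast

lemma sl_dirD: "(t, x) \<in> V \<Longrightarrow> dirD (\<lambda>y. H (t, y)) x h = pd H (0, h) (t, x)"
  using dirD_slice smooth_diff[OF s] by blast

lemma sl_dirD_fun: "(t, x) \<in> V \<Longrightarrow> y \<in> {y. (t, y) \<in> V} \<Longrightarrow> dirD (\<lambda>y. H (t, y)) y h = (\<lambda>y. pd H (0, h) (t, y)) y"
  using sl_dirD by simp

lemma sl_dirD_diff: "(t, x) \<in> V \<Longrightarrow> (\<lambda>y. dirD (\<lambda>y. H (t, y)) y h) differentiable (at x)"
proof -
  assume p: "(t, x) \<in> V"
  have d: "(\<lambda>y. pd H (0, h) (t, y)) differentiable (at x)"
    using slice_diff smooth_pd_diff[OF o s p] by blast
  show ?thesis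
    by (rule diff_cong[OF open_slice[OF o] slice_open_mem[OF p] _ d]) (simp add: sl_dirD)
qed

lemma sl_dirD2: "(t, x) \<in> V \<Longrightarrow> dirD (\<lambda>y. dirD (\<lambda>y. H (t, y)) y i) x j = pd (pd H (0, i)) (0, j) (t, x)"
proof -
  assume p: "(t, x) \<in> V"
  have d: "(\<lambda>y. pd H (0, i) (t, y)) differentiable (at x)"
    using slice_diff smooth_pd_diff[OF o s p] by blast
  have "dirD (\<lambda>y. dirD (\<lambda>y. H (t, y)) y i) x j = dirD (\<lambda>y. pd H (0, i) (t, y)) x j"
    by (rule dirD_cong[OF open_slice[OF o] slice_open_mem[OF p] _ d]) (simp add: sl_dirD)
  also have "\<dots> = pd (pd H (0, i)) (0, j) (t, x)"
    by (rule dirD_slice, rule smooth_pd_diff[OF o s p])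
  finally show ?thesis .
qed

lemma sl_lap: "(t, x) \<in> V \<Longrightarrow> lap (\<lambda>y. H (t, y)) x = (\<Sum>i\<in>Basis. pd (pd H (0, i)) (0, i) (t, x))"
  unfolding lap_def using sl_dirD2 by simp

lemma sl_conv: "(t, x) \<in> V \<Longrightarrow> conv u (\<lambda>y. H (t, y)) x = pd H (0, u x) (t, x)"
  unfolding conv_def using sl_dirD by simp

lemma sl_dt: "t0 < T \<Longrightarrow> t \<in> {t0..T} \<Longrightarrow> (t, x) \<in> V \<Longrightarrow> dt t0 T (\<lambda>s y. H (s, y)) t x = pd H (1, 0) (t, x)"
proof -
  assume a: "t0 < T" "t \<in> {t0..T}" "(t, x) \<in> V"
  have "((\<lambda>s. H (s, x)) has_vector_derivative pd H (1, 0) (t, x)) (at t)"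
    using time_vd smooth_diff[OF s a(3)] by blast
  then have "((\<lambda>s. H (s, x)) has_vector_derivative pd H (1, 0) (t, x)) (at t within {t0..T})"
    by (rule has_vector_derivative_at_within)
  then show ?thesis unfolding dt_def
    using vector_derivative_within_closed_interval[OF a(1) a(2)] by blast
qed

end

context
  fixes V :: "(real \<times> 'a::euclidean_space) set" and H :: "real \<times> 'a \<Rightarrow> real"
  assumes o: "open V" and s: "smooth_on_set V H"
begin

lemma sl_grad: "(t, x) \<in> V \<Longrightarrow> grad (\<lambda>y. H (t, y)) x = (\<Sum>i\<in>Basis. pd H (0, i) (t, x) *\<^sub>R i)"
proof -
  assume p: "(t, x) \<in> V"
  have "H differentiable (at (t, x))" using smooth_diff[OF s p] .
  then show ?thesis unfolding grad_def by (simp add: dirD_slice)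
qed

end

context
  fixes V :: "(real \<times> 'a::euclidean_space) set" and H :: "real \<times> 'a \<Rightarrow> 'a"
  assumes o: "open V" and s: "smooth_on_set V H"
begin

lemma sl_divg: "(t, x) \<in> V \<Longrightarrow> divg (\<lambda>y. H (t, y)) x = (\<Sum>i\<in>Basis. pd H (0, i) (t, x) \<bullet> i)"
proof -
  assume p: "(t, x) \<in> V"
  have "H differentiable (at (t, x))" using smooth_diff[OF s p] .
  then show ?thesis unfolding divg_def by (simp add: dirD_slice)
qed

end


lemma hmp_le:
  fixes v :: "real \<times> 'a::euclidean_space \<Rightarrow> real" and \<Omega> :: "'a set"
  assumes o: "open V" and s: "smooth_on_set V v" and KV: "{t0..T} \<times> closure \<Omega> \<subseteq> V"
    and tT: "t0 \<le> T" and oO: "open \<Omega>" and bO: "bounded \<Omega>" and nu: "\<nu> \<ge> 0"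
    and heat: "\<And>t x. t \<in> {t0..T} \<Longrightarrow> x \<in> \<Omega> \<Longrightarrow>
        pd v (1, 0) (t, x) = \<nu> * (\<Sum>i\<in>Basis. pd (pd v (0, i)) (0, i) (t, x))"
    and init: "\<And>x. x \<in> \<Omega> \<Longrightarrow> v (t0, x) \<le> 0"
    and bdry: "\<And>t x. t \<in> {t0..T} \<Longrightarrow> x \<in> frontier \<Omega> \<Longrightarrow> v (t, x) \<le> 0"
  shows "\<forall>t\<in>{t0..T}. \<forall>x\<in>closure \<Omega>. v (t, x) \<le> 0"
proof (rule ccontr)
  assume "\<not> ?thesis"
  then obtain t1 x1 where t1: "t1 \<in> {t0..T}" "x1 \<in> closure \<Omega>" "v (t1, x1) > 0" by force
  define K where "K = {t0..T} \<times> closure \<Omega>"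
  have cK: "compact K" unfolding K_def
    by (intro compact_Times compact_Icc) (simp add: bO compact_closure)
  have t1K: "(t1, x1) \<in> K" using t1 by (simp add: K_def)
  define \<epsilon> where "\<epsilon> = v (t1, x1) / (2 * (T - t0 + 1))"
  have ep: "\<epsilon> > 0" using t1 tT by (simp add: \<epsilon>_def)
  define z where "z p = v p - \<epsilon> * (fst p - t0)" for p
  have cz: "continuous_on K z" unfolding z_def
    by (intro continuous_intros continuous_on_subset[OF smooth_cont[OF s]]) (use KV K_def in auto)
  obtain pm where pm: "pm \<in> K" "\<And>q. q \<in> K \<Longrightarrow> z q \<le> z pm"
    using continuous_attains_sup[OF cK _ cz] t1K by blast
  obtain ts xs where pmd: "pm = (ts, xs)" by (cases pm)
  have tsK: "ts \<in> {t0..T}" "xs \<in> closure \<Omega>" using pm pmd by (auto simp: K_def)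
  have "\<epsilon> * (t1 - t0) \<le> \<epsilon> * (T - t0 + 1)" using ep t1 by (intro mult_left_mono) auto
  also have "\<dots> = v (t1, x1) / 2" unfolding \<epsilon>_def using tT by (simp add: field_simps)
  finally have "z (t1, x1) > 0" using t1 by (simp add: z_def)
  then have zpos: "z (ts, xs) > 0" using pm(2)[OF t1K] pmd by simp
  have "\<epsilon> * (ts - t0) \<ge> 0" using ep tsK by simp
  then have vpos: "v (ts, xs) > 0" using zpos by (simp add: z_def)
  have xsO: "xs \<in> \<Omega>"
  proof (rule ccontr)
    assume "xs \<notin> \<Omega>"
    then have "xs \<in> frontier \<Omega>" using tsK(2) closure_Un_frontier by auto
    then show False using bdry[OF tsK(1)] vpos by fastforce
  qed
  have tsne: "ts \<noteq> t0" using init[OF xsO] vpos by auto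
  have psV: "(ts, xs) \<in> V" using KV tsK by auto
  define a where "a = pd v (1, 0) (ts, xs)"
  have a_ge: "a \<ge> \<epsilon>"
  proof (rule ccontr)
    assume "\<not> a \<ge> \<epsilon>"
    then have neg: "a - \<epsilon> < 0" by simp
    have "((\<lambda>s. v (s, xs) - \<epsilon> * s) has_real_derivative a - \<epsilon>) (at ts)"
      unfolding a_def
      by (intro DERIV_diff time_rd smooth_diff[OF s psV]) (auto intro!: derivative_eq_intros)
    then obtain d where d: "d > 0" "\<And>h. h > 0 \<Longrightarrow> h < d \<Longrightarrow> v (ts, xs) - \<epsilon> * ts < v (ts - h, xs) - \<epsilon> * (ts - h)"
      using DERIV_neg_dec_left[OF _ neg] by blast
    define h where "h = min d (ts - t0) / 2"
    have h: "h > 0" "h < d" "ts - h \<ge> t0" using d tsK tsne unfolding h_def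
      by (auto simp: min_def field_simps)
    have "(ts - h, xs) \<in> K" using h tsK by (auto simp: K_def)
    then have "z (ts - h, xs) \<le> z (ts, xs)" using pm(2) pmd by simp
    then have "v (ts - h, xs) - \<epsilon> * (ts - h) \<le> v (ts, xs) - \<epsilon> * ts"
      by (simp add: z_def algebra_simps)
    then show False using d(2)[OF h(1) h(2)] by simp
  qed
  obtain \<delta> where dl: "\<delta> > 0" "ball xs \<delta> \<subseteq> \<Omega>" using oO xsO open_contains_ball by blast
  have b_le: "pd (pd v (0, i)) (0, i) (ts, xs) \<le> 0" if i: "i \<in> Basis" for i
  proof -
    define hh where "hh r = v ((ts, xs) + r *\<^sub>R (0, i))" for r
    define hh' where "hh' r = pd v (0, i) ((ts, xs) + r *\<^sub>R (0, i))" for r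
    have inO: "xs + r *\<^sub>R i \<in> \<Omega>" if "\<bar>r\<bar> < \<delta>" for r
    proof -
      have "dist xs (xs + r *\<^sub>R i) = \<bar>r\<bar>" using i by (simp add: dist_norm)
      then show ?thesis using dl that by auto
    qed
    have ptV: "(ts, xs) + r *\<^sub>R (0, i) \<in> V" if "\<bar>r\<bar> < \<delta>" for r
    proof -
      have "(ts, xs + r *\<^sub>R i) \<in> {t0..T} \<times> closure \<Omega>"
        using tsK inO[OF that] closure_subset by auto
      then show ?thesis using KV by auto
    qed
    show ?thesis
    proof (rule second_deriv_max[OF dl(1), of hh hh'])
      fix r :: real assume r: "\<bar>r\<bar> < \<delta>"
      show "(hh has_real_derivative hh' r) (at r)"
        unfolding hh_def hh'_def pd_def
        by (rule line_deriv_real, rule smooth_diff[OF s ptV[OF r]])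
      have "((ts, xs + r *\<^sub>R i)) \<in> K" using inO[OF r] tsK closure_subset by (auto simp: K_def)
      then have "z (ts, xs + r *\<^sub>R i) \<le> z (ts, xs)" using pm(2) pmd by simp
      then show "hh r \<le> hh 0" by (simp add: hh_def z_def)
    next
      show "(hh' has_real_derivative pd (pd v (0, i)) (0, i) (ts, xs)) (at 0)"
        unfolding hh'_def using line_deriv_real[of "pd v (0, i)" "(ts, xs)" 0 "(0, i)"]
          smooth_pd_diff[OF o s psV] by (simp add: pd_def[of "pd v (0, i)"])
    qed
  qed
  have "a \<le> 0" unfolding a_def heat[OF tsK(1) xsO]
    using b_le nu by (simp add: mult_nonneg_nonpos sum_nonpos)
  then show False using a_ge ep by simp
qed


lemma inner_line: "(p + r *\<^sub>R h - y) \<bullet> (p + r *\<^sub>R h - y) =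
   (p - y) \<bullet> (p - y) + 2 * r * ((p - y) \<bullet> h) + r * r * (h \<bullet> h)"
proof -
  have "p + r *\<^sub>R h - y = (p - y) + r *\<^sub>R h" by (simp add: algebra_simps)
  then show ?thesis by (simp add: inner_add_left inner_add_right inner_commute algebra_simps)
qed

lemma exp_quad_deriv:
  "((\<lambda>r. exp (- \<alpha> * (Q + 2 * r * c + r * r * H))) has_real_derivative
     exp (- \<alpha> * (Q + 2 * r * c + r * r * H)) * (- \<alpha> * (2 * c + 2 * r * H))) (at r)"
  by (auto intro!: derivative_eq_intros simp: algebra_simps)

lemma exp_quad_deriv2:
  "((\<lambda>r. exp (- \<alpha> * (Q + 2 * r * c + r * r * H)) * (- \<alpha> * (2 * c + 2 * r * H))) has_real_derivative
     exp (- \<alpha> * Q) * (4 * \<alpha> * \<alpha> * c * c - 2 * \<alpha> * H)) (at 0)"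
proof -
  have lin: "((\<lambda>r. - \<alpha> * (2 * c + 2 * r * H)) has_real_derivative (- \<alpha> * (2 * H))) (at 0)"
    by (auto intro!: derivative_eq_intros)
  from DERIV_mult[OF exp_quad_deriv[of \<alpha> Q c H 0] lin]
  show ?thesis by (simp add: algebra_simps)
qed

lemma hopf:
  fixes phi :: "'a::euclidean_space \<Rightarrow> real"
  assumes o: "open V" and s: "smooth_on_set V phi" and cb: "cball y R \<subseteq> V" and R: "R > 0"
    and sub: "\<And>x. x \<in> ball y R \<Longrightarrow> (\<Sum>i\<in>Basis. pd (pd phi i) i x) \<ge> 0"
    and x0: "dist y x0 = R"
    and lt: "\<And>x. x \<in> ball y R \<Longrightarrow> phi x < phi x0"
  shows "pd phi (x0 - y) x0 > 0"
proof -
  define DD where "DD = real DIM('a)"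
  define \<alpha> where "\<alpha> = (2 * DD + 1) / (R * R)"
  have al: "\<alpha> > 0" "\<alpha> * (R * R) = 2 * DD + 1" using R by (auto simp: \<alpha>_def DD_def)
  define E where "E = exp (- \<alpha> * (R * R))"
  define v where "v x = exp (- \<alpha> * ((x - y) \<bullet> (x - y))) - E" for x
  have cphi: "continuous_on (cball y R) phi"
    using continuous_on_subset[OF smooth_cont[OF s] cb] .
  have cv: "continuous_on UNIV v" unfolding v_def by (intro continuous_intros)
  have le_cl: "phi x \<le> phi x0" if "x \<in> cball y R" for x
    using continuous_le_on_closure[of "ball y R" phi x "phi x0"] cphi that R lt
    by (auto simp: less_imp_le)
  obtain m where m: "m < 0" "\<And>x. x \<in> sphere y (R/2) \<Longrightarrow> phi x - phi x0 \<le> m"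
  proof -
    have ne: "sphere y (R/2) \<noteq> {}" using R by simp
    have cs: "continuous_on (sphere y (R/2)) (\<lambda>x. phi x - phi x0)"
      by (intro continuous_intros continuous_on_subset[OF cphi]) (use R in auto)
    obtain xm where xm: "xm \<in> sphere y (R/2)" "\<And>x. x \<in> sphere y (R/2) \<Longrightarrow> phi x - phi x0 \<le> phi xm - phi x0"
      using continuous_attains_sup[OF compact_sphere ne cs] by blast
    have "xm \<in> ball y R" using xm R by auto
    then have "phi xm - phi x0 < 0" using lt by simp
    then show ?thesis using that xm by blast
  qed
  define \<epsilon> where "\<epsilon> = - m / 2"
  have ep: "\<epsilon> > 0" using m by (simp add: \<epsilon>_def)
  define z where "z x = phi x - phi x0 + \<epsilon> * v x" for x
  define KA where "KA = cball y R - ball y (R/2)"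
  have cKA: "compact KA" unfolding KA_def by (intro compact_diff) auto
  have KAc: "KA \<subseteq> cball y R" by (auto simp: KA_def)
  have x0KA: "x0 \<in> KA" using x0 R by (auto simp: KA_def)
  have cz: "continuous_on KA z" unfolding z_def
    by (intro continuous_intros continuous_on_subset[OF cphi KAc] continuous_on_subset[OF cv]) auto
  obtain pz where pz: "pz \<in> KA" "\<And>x. x \<in> KA \<Longrightarrow> z x \<le> z pz"
    using continuous_attains_sup[OF cKA _ cz] x0KA by blast
  have vle1: "v x \<le> 1" for x
  proof -
    have "exp (- \<alpha> * ((x - y) \<bullet> (x - y))) \<le> 1" using al by (simp add: mult_nonneg_nonneg)
    moreover have "E > 0" by (simp add: E_def)
    ultimately show ?thesis unfolding v_def by linarith
  qed
  have zpz: "z pz \<le> 0"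
  proof -
    consider "dist y pz = R / 2" | "dist y pz = R" | "R / 2 < dist y pz \<and> dist y pz < R"
      using pz(1) by (force simp: KA_def)
    then show ?thesis
    proof cases
      case 1
      then have "phi pz - phi x0 \<le> m" using m by simp
      moreover have "\<epsilon> * v pz \<le> \<epsilon>" using vle1[of pz] ep by simp
      ultimately show ?thesis unfolding z_def using \<epsilon>_def m(1) by linarith
    next
      case 2
      have "(pz - y) \<bullet> (pz - y) = R * R"
        using 2 by (simp add: dist_norm norm_minus_commute power2_eq_square[symmetric] dot_square_norm)
      then have "v pz = 0" by (simp add: v_def E_def)
      moreover have "phi pz \<le> phi x0" using le_cl 2 by simp
      ultimately show ?thesis by (simp add: z_def)
    next
      case 3
      define q where "q = pz - y"
      define Q where "Q = q \<bullet> q"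
      have Qg: "Q > R * R / 4"
      proof -
        have "norm q > R / 2" using 3 by (simp add: q_def dist_norm norm_minus_commute)
        then have "norm q * norm q > (R/2) * (R/2)" using R by (intro mult_strict_mono) auto
        then show ?thesis by (simp add: Q_def dot_square_norm power2_eq_square)
      qed
      obtain \<delta> where dl: "\<delta> > 0" "ball pz \<delta> \<subseteq> {x. R / 2 < dist y x \<and> dist y x < R}"
      proof -
        have "open {x. R / 2 < dist y x \<and> dist y x < R}"
          by (intro open_Collect_conj open_Collect_less continuous_intros)
        then show ?thesis using 3 that open_contains_ball by blast
      qed
      have pzball: "pz \<in> ball y R" using 3 by simp
      have pzV: "pz \<in> V" using pzball cb by auto
      have each: "pd (pd phi i) i pz + \<epsilon> * (exp (- \<alpha> * Q) * (4 * \<alpha> * \<alpha> * (q \<bullet> i) * (q \<bullet> i) - 2 * \<alpha>)) \<le> 0"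
        if i: "i \<in> Basis" for i
      proof -
        define hh where "hh r = z (pz + r *\<^sub>R i)" for r
        define hh' where "hh' r = pd phi i (pz + r *\<^sub>R i) +
           \<epsilon> * (exp (- \<alpha> * (Q + 2 * r * (q \<bullet> i) + r * r * 1)) * (- \<alpha> * (2 * (q \<bullet> i) + 2 * r * 1)))" for r
        have inA: "pz + r *\<^sub>R i \<in> ball pz \<delta>" if "\<bar>r\<bar> < \<delta>" for r
          using that i by (simp add: dist_norm)
        have inKA: "pz + r *\<^sub>R i \<in> KA" if "\<bar>r\<bar> < \<delta>" for r
          using dl(2) inA[OF that] by (auto simp: KA_def)
        have vline: "v (pz + r *\<^sub>R i) = exp (- \<alpha> * (Q + 2 * r * (q \<bullet> i) + r * r * 1)) - E" for r
          unfolding v_def using inner_line[of pz r i y] i by (simp add: Q_def q_def)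
        show ?thesis
        proof (rule second_deriv_max[OF dl(1), of hh hh'])
          fix r :: real assume r: "\<bar>r\<bar> < \<delta>"
          have ptV: "pz + r *\<^sub>R i \<in> V" using inKA[OF r] KAc cb by auto
          have hheq: "hh = (\<lambda>r. phi (pz + r *\<^sub>R i) - phi x0 + \<epsilon> * (exp (- \<alpha> * (Q + 2 * r * (q \<bullet> i) + r * r * 1)) - E))"
            by (rule ext) (simp add: hh_def z_def vline)
          have A: "((\<lambda>r. phi (pz + r *\<^sub>R i)) has_real_derivative pd phi i (pz + r *\<^sub>R i)) (at r)"
            using line_deriv_real[of phi pz r i] smooth_diff[OF s ptV] by (simp add: pd_def)
          show "(hh has_real_derivative hh' r) (at r)"
            unfolding hheq hh'_def
            using DERIV_add[OF DERIV_diff[OF A DERIV_const[where k="phi x0"]] DERIV_cmult[where c=\<epsilon>, OF DERIV_diff[OF exp_quad_deriv[where \<alpha>=\<alpha> and Q=Q and c="q \<bullet> i" and H=1 and r=r] DERIV_const[where k=E]]]]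
            by simp
          show "hh r \<le> hh 0" unfolding hh_def using pz(2)[OF inKA[OF r]] by simp
        next
          have d2: "((\<lambda>r. pd phi i (pz + r *\<^sub>R i)) has_real_derivative pd (pd phi i) i pz) (at 0)"
            using line_deriv_real[of "pd phi i" pz 0 i] smooth_pd_diff[OF o s pzV]
            by (simp add: pd_def[of "pd phi i"])
          show "(hh' has_real_derivative pd (pd phi i) i pz + \<epsilon> * (exp (- \<alpha> * Q) * (4 * \<alpha> * \<alpha> * (q \<bullet> i) * (q \<bullet> i) - 2 * \<alpha>))) (at 0)"
            unfolding hh'_def
            using DERIV_add[OF d2 DERIV_cmult[OF exp_quad_deriv2[of \<alpha> Q "q \<bullet> i" 1]], of \<epsilon>]
            by simp
        qed
      qed
      have "(\<Sum>i\<in>Basis. pd (pd phi i) i pz + \<epsilon> * (exp (- \<alpha> * Q) * (4 * \<alpha> * \<alpha> * (q \<bullet> i) * (q \<bullet> i) - 2 * \<alpha>))) \<le> 0"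
        using each by (simp add: sum_nonpos)
      moreover have "(\<Sum>i\<in>Basis. pd (pd phi i) i pz + \<epsilon> * (exp (- \<alpha> * Q) * (4 * \<alpha> * \<alpha> * (q \<bullet> i) * (q \<bullet> i) - 2 * \<alpha>)))
         = (\<Sum>i\<in>Basis. pd (pd phi i) i pz) + \<epsilon> * exp (- \<alpha> * Q) * (4 * \<alpha> * \<alpha> * Q - 2 * \<alpha> * DD)"
      proof -
        have sq: "(\<Sum>i\<in>Basis. (q \<bullet> i) * (q \<bullet> i)) = Q" unfolding Q_def using euclidean_inner[of q q] by simp
        define X where "X = exp (- \<alpha> * Q)"
        have "(\<Sum>i\<in>Basis. pd (pd phi i) i pz + \<epsilon> * (X * (4 * \<alpha> * \<alpha> * (q \<bullet> i) * (q \<bullet> i) - 2 * \<alpha>)))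
          = (\<Sum>i\<in>Basis. pd (pd phi i) i pz + (4 * \<epsilon> * X * \<alpha> * \<alpha>) * ((q \<bullet> i) * (q \<bullet> i)) - 2 * \<epsilon> * X * \<alpha>)"
          by (rule sum.cong) (auto simp: algebra_simps)
        also have "\<dots> = (\<Sum>i\<in>Basis. pd (pd phi i) i pz) + (4 * \<epsilon> * X * \<alpha> * \<alpha>) * (\<Sum>i\<in>Basis. (q \<bullet> i) * (q \<bullet> i)) - DD * (2 * \<epsilon> * X * \<alpha>)"
          by (simp add: sum.distrib sum_subtractf sum_distrib_left DD_def)
        also have "\<dots> = (\<Sum>i\<in>Basis. pd (pd phi i) i pz) + \<epsilon> * X * (4 * \<alpha> * \<alpha> * Q - 2 * \<alpha> * DD)"
          unfolding sq by (simp add: algebra_simps)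
        finally show ?thesis unfolding X_def .
      qed
      moreover have "4 * \<alpha> * \<alpha> * Q - 2 * \<alpha> * DD > 0"
      proof -
        have "4 * \<alpha> * \<alpha> * Q > 4 * \<alpha> * \<alpha> * (R * R / 4)" using Qg al(1) by (intro mult_strict_left_mono) auto
        also have "4 * \<alpha> * \<alpha> * (R * R / 4) = \<alpha> * (\<alpha> * (R * R))" by (simp add: algebra_simps)
        also have "\<dots> = \<alpha> * (2 * DD + 1)" using al(2) by simp
        finally have h: "\<alpha> * (2 * DD + 1) < 4 * \<alpha> * \<alpha> * Q" .
        have "\<alpha> * (2 * DD + 1) = 2 * \<alpha> * DD + \<alpha>" by (simp add: algebra_simps)
        then show ?thesis using h al(1) by linarith
      qed
      moreover have "(\<Sum>i\<in>Basis. pd (pd phi i) i pz) \<ge> 0" using sub[OF pzball] .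
      ultimately have False using ep by (smt (verit) exp_gt_zero mult_pos_pos)
      then show ?thesis ..
    qed
  qed
  define e where "e = y - x0"
  have ne: "norm e = R" using x0 by (simp add: e_def dist_norm)
  have zx0: "z x0 = 0"
  proof -
    have "(x0 - y) \<bullet> (x0 - y) = R * R" using ne
      by (simp add: e_def dot_square_norm power2_eq_square[symmetric] norm_minus_commute)
    then show ?thesis by (simp add: z_def v_def E_def)
  qed
  define g where "g s = z (x0 + s *\<^sub>R e)" for s
  have gle: "g s \<le> g 0" if "0 < s" "s < 1/2" for s
  proof -
    have "dist y (x0 + s *\<^sub>R e) = (1 - s) * R"
    proof -
      have "y - (x0 + s *\<^sub>R e) = (1 - s) *\<^sub>R e" by (simp add: e_def algebra_simps)
      then show ?thesis using that ne by (simp add: dist_norm)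
    qed
    then have "x0 + s *\<^sub>R e \<in> KA" using that R by (auto simp: KA_def)
    then have "z (x0 + s *\<^sub>R e) \<le> 0" using pz(2) zpz by force
    then show ?thesis using zx0 by (simp add: g_def)
  qed
  have x0V: "x0 \<in> V" using x0 cb by auto
  have vg: "v (x0 + s *\<^sub>R e) = exp (- \<alpha> * (R * R + 2 * s * (- (R * R)) + s * s * (R * R))) - E" for s
  proof -
    have "(x0 - y) \<bullet> (x0 - y) = R * R" using ne
      by (simp add: e_def dot_square_norm power2_eq_square[symmetric] norm_minus_commute)
    moreover have "(x0 - y) \<bullet> e = - (R * R)"
    proof -
      have "x0 - y = - e" by (simp add: e_def)
      then show ?thesis using ne by (simp add: dot_square_norm power2_eq_square)
    qed
    moreover have "e \<bullet> e = R * R" using ne by (simp add: dot_square_norm power2_eq_square)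
    ultimately show ?thesis unfolding v_def using inner_line[of x0 s e y] by simp
  qed
  define dv where "dv = exp (- \<alpha> * (R * R)) * (- \<alpha> * (2 * (- (R * R))))"
  have dvpos: "dv > 0" using al R by (simp add: dv_def mult_pos_pos)
  have gd: "(g has_real_derivative pd phi e x0 + \<epsilon> * dv) (at 0)"
  proof -
    have geq: "g = (\<lambda>s. phi (x0 + s *\<^sub>R e) - phi x0 + \<epsilon> * (exp (- \<alpha> * (R * R + 2 * s * (- (R * R)) + s * s * (R * R))) - E))"
      by (rule ext) (simp add: g_def z_def vg)
    have A: "((\<lambda>r. phi (x0 + r *\<^sub>R e)) has_real_derivative pd phi e (x0 + 0 *\<^sub>R e)) (at 0)"
      using line_deriv_real[of phi x0 0 e] smooth_diff[OF s x0V] by (simp add: pd_def)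
    have "(g has_real_derivative pd phi e (x0 + 0 *\<^sub>R e) - 0 + \<epsilon> * (exp (- \<alpha> * (R * R + 2 * 0 * (- (R * R)) + 0 * 0 * (R * R))) * (- \<alpha> * (2 * (- (R * R)) + 2 * 0 * (R * R))) - 0)) (at 0)"
      unfolding geq
      using DERIV_add[OF DERIV_diff[OF A DERIV_const[where k="phi x0"]] DERIV_cmult[where c=\<epsilon>, OF DERIV_diff[OF exp_quad_deriv[where \<alpha>=\<alpha> and Q="R * R" and c="- (R * R)" and H="R * R" and r=0] DERIV_const[where k=E]]]]
      by simp
    then show ?thesis by (simp add: dv_def)
  qed
  have "pd phi e x0 + \<epsilon> * dv \<le> 0"
  proof (rule ccontr)
    assume "\<not> ?thesis"
    then obtain d where d: "d > 0" "\<And>h. h > 0 \<Longrightarrow> h < d \<Longrightarrow> g 0 < g (0 + h)"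
      using DERIV_pos_inc_right[OF gd] by force
    define h where "h = min d (1/2) / 2"
    have "h > 0" "h < d" "h < 1/2" using d by (auto simp: h_def)
    then show False using d(2) gle by force
  qed
  then have "pd phi e x0 < 0" using ep dvpos by (smt (verit) mult_pos_pos)
  moreover have "pd phi (x0 - y) x0 = - pd phi e x0"
    using fd_scale_dir[OF smooth_diff[OF s x0V], of "-1" e] by (simp add: pd_def e_def)
  ultimately show ?thesis by simp
qed


lemma grad_inner: "phi differentiable (at x) \<Longrightarrow> grad phi x \<bullet> h = pd phi h x"
proof -
  assume d: "phi differentiable (at x)"
  have "grad phi x \<bullet> h = (\<Sum>i\<in>Basis. dirD phi x i * (i \<bullet> h))"
    unfolding grad_def by (simp add: inner_sum_left)
  also have "\<dots> = (\<Sum>i\<in>Basis. (h \<bullet> i) *\<^sub>R frechet_derivative phi (at x) i)"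
    by (simp add: dirD_def inner_commute mult.commute)
  also have "\<dots> = pd phi h x" using fd_expand[OF d, of h] by (simp add: pd_def)
  finally show ?thesis .
qed

lemma max_pd_zero:
  fixes phi :: "'a::euclidean_space \<Rightarrow> real"
  assumes o: "open S" and x0: "x0 \<in> S" and d: "phi differentiable (at x0)"
    and mx: "\<And>x. x \<in> S \<Longrightarrow> phi x \<le> phi x0"
  shows "pd phi h x0 = 0"
proof -
  obtain e where e: "e > 0" "ball x0 e \<subseteq> S" using o x0 open_contains_ball by blast
  define e' where "e' = e / (norm h + 1)"
  have np: "norm h + 1 > 0" using norm_ge_zero[of h] by linarith
  have e': "e' > 0" using e np by (simp add: e'_def)
  have "((\<lambda>r. phi (x0 + r *\<^sub>R h)) has_real_derivative pd phi h x0) (at 0)"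
    using line_deriv_real[of phi x0 0 h] d by (simp add: pd_def)
  moreover have "\<forall>r. \<bar>0 - r\<bar> < e' \<longrightarrow> phi (x0 + r *\<^sub>R h) \<le> phi (x0 + 0 *\<^sub>R h)"
  proof (intro allI impI)
    fix r :: real assume r: "\<bar>0 - r\<bar> < e'"
    have "norm (r *\<^sub>R h) = \<bar>r\<bar> * norm h" by simp
    also have "\<dots> \<le> e' * norm h" using r by (intro mult_right_mono) auto
    also have "\<dots> < e' * (norm h + 1)" using e' by simp
    also have "\<dots> = e" using np by (simp add: e'_def)
    finally have "x0 + r *\<^sub>R h \<in> ball x0 e" by (simp add: dist_norm)
    then show "phi (x0 + r *\<^sub>R h) \<le> phi (x0 + 0 *\<^sub>R h)" using e mx by auto
  qed
  ultimately show ?thesis using DERIV_local_max[OF _ e'] by blast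
qed

lemma smp:
  fixes phi :: "'a::euclidean_space \<Rightarrow> real"
  assumes o: "open V" and s: "smooth_on_set V phi" and OV: "\<Omega> \<subseteq> V" and oO: "open \<Omega>"
    and cO: "connected \<Omega>"
    and sub: "\<And>x. x \<in> \<Omega> \<Longrightarrow> (\<Sum>i\<in>Basis. pd (pd phi i) i x) \<ge> 0"
    and le: "\<And>x. x \<in> \<Omega> \<Longrightarrow> phi x \<le> M"
    and x1: "x1 \<in> \<Omega>" "phi x1 = M"
  shows "\<forall>x\<in>\<Omega>. phi x = M"
proof -
  define S where "S = {x\<in>\<Omega>. phi x = M}"
  define T where "T = \<Omega> \<inter> phi -` {..<M}"
  have cphi: "continuous_on \<Omega> phi" using continuous_on_subset[OF smooth_cont[OF s] OV] .
  have oT: "open T" unfolding T_def by (rule continuous_open_preimage[OF cphi oO]) auto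
  have oS: "open S"
  proof (unfold open_contains_ball, intro ballI)
    fix xa assume xa: "xa \<in> S"
    have "xa \<in> \<Omega>" using xa by (simp add: S_def)
    then obtain d where d: "d > 0" "ball xa d \<subseteq> \<Omega>" using oO open_contains_ball by blast
    have "ball xa (d/2) \<subseteq> S"
    proof
      fix y assume y: "y \<in> ball xa (d/2)"
      show "y \<in> S"
      proof (rule ccontr)
        assume yS: "y \<notin> S"
        have yO: "y \<in> \<Omega>" using y d by auto
        then have ylt: "phi y < M" using yS le[OF yO] by (auto simp: S_def)
        define \<rho> where "\<rho> = dist y xa"
        have cbO: "cball y \<rho> \<subseteq> ball xa d"
        proof
          fix x assume "x \<in> cball y \<rho>"
          then have "dist y x \<le> \<rho>" by simp
          then have "dist xa x \<le> dist xa y + dist y x" using dist_triangle by blast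
          then show "x \<in> ball xa d" using y \<open>dist y x \<le> \<rho>\<close> by (simp add: \<rho>_def dist_commute)
        qed
        define K where "K = {x\<in>cball y \<rho>. phi x = M}"
        have cK: "closed K" unfolding K_def
          by (rule continuous_closed_preimage_constant)
             (use continuous_on_subset[OF cphi] cbO d in auto)
        have xaK: "xa \<in> K" using xa by (simp add: K_def S_def \<rho>_def dist_commute)
        obtain x0 where x0: "x0 \<in> K" "\<And>x. x \<in> K \<Longrightarrow> dist y x0 \<le> dist y x"
          using distance_attains_inf[OF cK, of y] xaK by blast
        define R where "R = dist y x0"
        have Rpos: "R > 0" using x0 ylt by (auto simp: K_def R_def)
        have Rle: "R \<le> \<rho>" using x0 xaK by (auto simp: R_def \<rho>_def dist_commute)
        have "cball y R \<subseteq> cball y \<rho>" using Rle by auto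
        then have cbR: "cball y R \<subseteq> \<Omega>" using cbO d by blast
        have x0O: "x0 \<in> \<Omega>" using x0 cbO d by (auto simp: K_def)
        have x0M: "phi x0 = M" using x0 by (simp add: K_def)
        have "pd phi (x0 - y) x0 > 0"
        proof (rule hopf[OF o s _ Rpos])
          show "cball y R \<subseteq> V" using cbR OV by auto
          show "dist y x0 = R" by (simp add: R_def)
          fix x assume x: "x \<in> ball y R"
          then have xO: "x \<in> \<Omega>" using cbR by auto
          show "0 \<le> (\<Sum>i\<in>Basis. pd (pd phi i) i x)" using sub[OF xO] .
          have "x \<notin> K" using x x0(2) by (force simp: R_def)
          moreover have "x \<in> cball y \<rho>" using x Rle by auto
          ultimately have "phi x \<noteq> M" by (auto simp: K_def)
          then show "phi x < phi x0" using le[OF xO] x0M by simp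
        qed
        moreover have "pd phi (x0 - y) x0 = 0"
          by (rule max_pd_zero[OF oO x0O smooth_diff[OF s]]) (use x0O OV le x0M in auto)
        ultimately show False by simp
      qed
    qed
    then show "\<exists>e>0. ball xa e \<subseteq> S" using d by (intro exI[of _ "d/2"]) auto
  qed
  have "\<Omega> \<subseteq> S \<union> T" using le by (force simp: S_def T_def)
  moreover have "S \<inter> T \<inter> \<Omega> = {}" by (auto simp: S_def T_def)
  ultimately have "S \<inter> \<Omega> = {} \<or> T \<inter> \<Omega> = {}" using connectedD[OF cO oS oT] by blast
  moreover have "x1 \<in> S \<inter> \<Omega>" using x1 by (simp add: S_def)
  ultimately have "T \<inter> \<Omega> = {}" by blast
  then show ?thesis using le by (force simp: T_def)
qed


lemma pd2_expand:
  fixes psi :: "'a::euclidean_space \<Rightarrow> real"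
  assumes o: "open U" and s: "smooth_on_set U psi" and p: "p \<in> U"
  shows "pd (pd psi d) d p = (\<Sum>i\<in>Basis. (d \<bullet> i) * (\<Sum>j\<in>Basis. (d \<bullet> j) * pd (pd psi i) j p))"
proof -
  have sm: "smooth_on_set U (\<lambda>y. \<Sum>i\<in>Basis. (d \<bullet> i) *\<^sub>R pd psi i y)"
    by (intro smooth_sum[OF o] smooth_scaleR[OF o] smooth_pd[OF o s]) auto
  have "pd (pd psi d) d p = pd (\<lambda>y. \<Sum>i\<in>Basis. (d \<bullet> i) *\<^sub>R pd psi i y) d p"
    by (rule pd_cong_fun[OF o sm _ p]) (simp add: pd_def fd_expand[OF smooth_diff[OF s]])
  also have "\<dots> = (\<Sum>i\<in>Basis. pd (\<lambda>y. (d \<bullet> i) *\<^sub>R pd psi i y) d p)"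
    unfolding pd_def[of "\<lambda>y. \<Sum>i\<in>Basis. (d \<bullet> i) *\<^sub>R pd psi i y"] pd_def[of "\<lambda>y. (d \<bullet> _) *\<^sub>R pd psi _ y"]
    by (rule fd_sum) (auto intro!: diff_lin[where L="\<lambda>v. (d \<bullet> _) *\<^sub>R v"] bounded_linear_scaleR_right smooth_pd_diff[OF o s p])
  also have "\<dots> = (\<Sum>i\<in>Basis. (d \<bullet> i) * pd (pd psi i) d p)"
  proof (rule sum.cong[OF refl])
    fix i :: 'a
    show "pd (\<lambda>y. (d \<bullet> i) *\<^sub>R pd psi i y) d p = (d \<bullet> i) * pd (pd psi i) d p"
    proof -
      have "frechet_derivative (\<lambda>y. (d \<bullet> i) *\<^sub>R pd psi i y) (at p) d = (d \<bullet> i) *\<^sub>R frechet_derivative (pd psi i) (at p) d"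
        using fd_scaleR[OF smooth_pd_diff[OF o s p, where a=i], where c="d \<bullet> i" and h=d] .
      then show ?thesis by (simp only: pd_def[of "\<lambda>y. (d \<bullet> i) * pd psi i y"] pd_def[of "\<lambda>y. (d \<bullet> i) *\<^sub>R pd psi i y"] pd_def[of "pd psi i"] real_scaleR_def)
    qed
  qed
  also have "\<dots> = (\<Sum>i\<in>Basis. (d \<bullet> i) * (\<Sum>j\<in>Basis. (d \<bullet> j) * pd (pd psi i) j p))"
  proof (rule sum.cong[OF refl])
    fix i :: 'a
    have "frechet_derivative (pd psi i) (at p) d = (\<Sum>j\<in>Basis. (d \<bullet> j) *\<^sub>R frechet_derivative (pd psi i) (at p) j)"
      using fd_expand[OF smooth_pd_diff[OF o s p, where a=i], where h=d] .
    then show "(d \<bullet> i) * pd (pd psi i) d p = (d \<bullet> i) * (\<Sum>j\<in>Basis. (d \<bullet> j) * pd (pd psi i) j p)"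
      by (simp only: pd_def[of "pd psi i"] real_scaleR_def)
  qed
  finally show ?thesis .
qed


lemma pd2_bound:
  fixes psi :: "'a::euclidean_space \<Rightarrow> real"
  assumes o: "open U" and s: "smooth_on_set U psi" and p: "p \<in> U"
  shows "\<bar>pd (pd psi d) d p\<bar> \<le> (\<Sum>i\<in>Basis. \<Sum>j\<in>Basis. \<bar>pd (pd psi i) j p\<bar>) * (norm d * norm d)"
proof -
  have "\<bar>pd (pd psi d) d p\<bar> \<le> (\<Sum>i\<in>Basis. \<bar>(d \<bullet> i) * (\<Sum>j\<in>Basis. (d \<bullet> j) * pd (pd psi i) j p)\<bar>)"
    unfolding pd2_expand[OF o s p] by (rule sum_abs)
  also have "\<dots> \<le> (\<Sum>i\<in>Basis. norm d * (\<Sum>j\<in>Basis. norm d * \<bar>pd (pd psi i) j p\<bar>))"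
  proof (rule sum_mono)
    fix i :: 'a assume i: "i \<in> Basis"
    have a: "\<bar>d \<bullet> i\<bar> \<le> norm d" using Basis_le_norm[OF i] .
    have "\<bar>\<Sum>j\<in>Basis. (d \<bullet> j) * pd (pd psi i) j p\<bar> \<le> (\<Sum>j\<in>Basis. \<bar>(d \<bullet> j) * pd (pd psi i) j p\<bar>)"
      by (rule sum_abs)
    also have "\<dots> \<le> (\<Sum>j\<in>Basis. norm d * \<bar>pd (pd psi i) j p\<bar>)"
      by (rule sum_mono) (auto simp: abs_mult intro!: mult_right_mono Basis_le_norm)
    finally have b: "\<bar>\<Sum>j\<in>Basis. (d \<bullet> j) * pd (pd psi i) j p\<bar> \<le> (\<Sum>j\<in>Basis. norm d * \<bar>pd (pd psi i) j p\<bar>)" .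
    show "\<bar>(d \<bullet> i) * (\<Sum>j\<in>Basis. (d \<bullet> j) * pd (pd psi i) j p)\<bar> \<le> norm d * (\<Sum>j\<in>Basis. norm d * \<bar>pd (pd psi i) j p\<bar>)"
      unfolding abs_mult by (rule mult_mono[OF a b]) auto
  qed
  also have "\<dots> = (\<Sum>i\<in>Basis. \<Sum>j\<in>Basis. \<bar>pd (pd psi i) j p\<bar>) * (norm d * norm d)"
    by (simp add: sum_distrib_left sum_distrib_right algebra_simps)
  finally show ?thesis .
qed

lemma taylor_bound:
  fixes psi :: "'a::euclidean_space \<Rightarrow> real"
  assumes o: "open U" and s: "smooth_on_set U psi" and x0: "x0 \<in> U"
  shows "\<exists>\<delta>>0. \<exists>C\<ge>0. cball x0 \<delta> \<subseteq> U \<and>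
    (\<forall>x\<in>cball x0 \<delta>. psi x \<le> psi x0 + pd psi (x - x0) x0 + C * (norm (x - x0) * norm (x - x0)))"
proof -
  obtain \<delta> where dl: "\<delta> > 0" "cball x0 \<delta> \<subseteq> U" using o x0 open_contains_cball by blast
  define Hn where "Hn p = (\<Sum>i\<in>Basis. \<Sum>j\<in>Basis. \<bar>pd (pd psi i) j p\<bar>)" for p
  have cH: "continuous_on (cball x0 \<delta>) Hn" unfolding Hn_def
    by (intro continuous_intros continuous_on_subset[OF smooth_cont[OF smooth_pd[OF o smooth_pd[OF o s]]] dl(2)])
  obtain pm where pm: "pm \<in> cball x0 \<delta>" "\<And>p. p \<in> cball x0 \<delta> \<Longrightarrow> Hn p \<le> Hn pm"
    using continuous_attains_sup[OF compact_cball _ cH] dl by fastforce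
  define C where "C = Hn pm"
  have C0: "C \<ge> 0" by (simp add: C_def Hn_def sum_nonneg)
  have main: "psi x \<le> psi x0 + pd psi (x - x0) x0 + C * (norm (x - x0) * norm (x - x0))" if x: "x \<in> cball x0 \<delta>" for x
  proof -
    define d where "d = x - x0"
    have seg: "x0 + s *\<^sub>R d \<in> cball x0 \<delta>" if "0 \<le> s" "s \<le> 1" for s
    proof -
      have "norm (s *\<^sub>R d) \<le> norm d" using that by (simp add: mult_left_le_one_le)
      also have "norm d \<le> \<delta>" using x by (simp add: d_def dist_norm norm_minus_commute)
      finally show ?thesis by (simp add: dist_norm)
    qed
    define f' where "f' r = pd psi d (x0 + r *\<^sub>R d)" for r
    define f'' where "f'' r = pd (pd psi d) d (x0 + r *\<^sub>R d)" for r
    have fd: "((\<lambda>r. psi (x0 + r *\<^sub>R d)) has_real_derivative f' r) (at r)" if "0 \<le> r" "r \<le> 1" for r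
      unfolding f'_def pd_def
      by (rule line_deriv_real, rule smooth_diff[OF s]) (use seg[OF that] dl in auto)
    have f'd: "(f' has_real_derivative f'' r) (at r)" if "0 \<le> r" "r \<le> 1" for r
      unfolding f'_def f''_def pd_def[of "pd psi d"]
      by (rule line_deriv_real, rule smooth_pd_diff[OF o s]) (use seg[OF that] dl in auto)
    have f''b: "f'' r \<le> C * (norm d * norm d)" if "0 \<le> r" "r \<le> 1" for r
    proof -
      have p: "x0 + r *\<^sub>R d \<in> U" using seg[OF that] dl by auto
      have "f'' r \<le> \<bar>f'' r\<bar>" by simp
      also have "\<dots> \<le> Hn (x0 + r *\<^sub>R d) * (norm d * norm d)"
        unfolding f''_def Hn_def by (rule pd2_bound[OF o s p])
      also have "\<dots> \<le> C * (norm d * norm d)"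
        unfolding C_def by (intro mult_right_mono pm(2) seg that) auto
      finally show ?thesis .
    qed
    show ?thesis
    proof (cases "d = 0")
      case True
      then show ?thesis using fd_zero_dir[OF smooth_diff[OF s x0]] by (simp add: d_def pd_def)
    next
      case False
      define g where "g r = psi (x0 + r *\<^sub>R d) - r * f' 0" for r
      have gd: "(g has_real_derivative f' r - f' 0) (at r)" if "0 \<le> r" "r \<le> 1" for r
        unfolding g_def using DERIV_diff[OF fd[OF that] DERIV_cmult_Id[of "f' 0" r]] by (simp add: mult.commute)
      obtain \<eta> where \<eta>: "0 < \<eta>" "\<eta> < 1" "g 1 - g 0 = (1 - 0) * (f' \<eta> - f' 0)"
        using MVT2[of 0 1 g "\<lambda>r. f' r - f' 0"] gd by auto
      obtain \<xi> where \<xi>: "0 < \<xi>" "\<xi> < \<eta>" "f' \<eta> - f' 0 = (\<eta> - 0) * f'' \<xi>"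
        using MVT2[of 0 \<eta> f' f''] f'd \<eta> by auto
      have "f'' \<xi> \<le> C * (norm d * norm d)" using f''b \<xi> \<eta> by auto
      moreover have "C * (norm d * norm d) \<ge> 0" using C0 by simp
      ultimately have "\<eta> * f'' \<xi> \<le> \<eta> * (C * (norm d * norm d))"
        using \<eta> by (intro mult_left_mono) auto
      also have "\<dots> \<le> C * (norm d * norm d)"
        using \<eta> \<open>C * (norm d * norm d) \<ge> 0\<close> by (intro mult_left_le_one_le) auto
      finally have "\<eta> * f'' \<xi> \<le> C * (norm d * norm d)" .
      then have "g 1 - g 0 \<le> C * (norm d * norm d)" using \<eta> \<xi> by simp
      moreover have "g 1 - g 0 = psi x - psi x0 - pd psi (x - x0) x0"
        by (simp add: g_def f'_def d_def)
      ultimately show ?thesis by (simp add: d_def)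
    qed
  qed
  show ?thesis using dl C0 main by blast
qed

lemma interior_ball:
  fixes \<Omega> :: "'a::euclidean_space set"
  assumes sb: "smooth_boundary_normal \<Omega> nrm" and oO: "open \<Omega>" and x0: "x0 \<in> frontier \<Omega>"
  shows "norm (nrm x0) = 1 \<and> (\<exists>r>0. ball (x0 - r *\<^sub>R nrm x0) r \<subseteq> \<Omega>)"
proof -
  obtain U psi where U: "open U" "x0 \<in> U" "smooth_on_set U (psi :: 'a \<Rightarrow> real)"
    "\<forall>y\<in>U. grad psi y \<noteq> 0" "\<Omega> \<inter> U = {y\<in>U. psi y < 0}"
    "\<forall>y\<in>U \<inter> frontier \<Omega>. nrm y = (1 / norm (grad psi y)) *\<^sub>R grad psi y"
    using sb x0 unfolding smooth_boundary_normal_def by metis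
  define G where "G = grad psi x0"
  define g0 where "g0 = norm G"
  have g0: "g0 > 0" using U(4) U(2) by (simp add: g0_def G_def)
  define n where "n = nrm x0"
  have nG: "n = (1 / g0) *\<^sub>R G" using U(6) U(2) x0 by (simp add: n_def g0_def G_def)
  have nn: "norm n = 1" using g0 by (simp add: nG g0_def)
  have x0nO: "x0 \<notin> \<Omega>" using x0 oO by (simp add: frontier_def interior_open)
  have psi0: "psi x0 \<ge> 0" using x0nO U(2) U(5) by (metis (mono_tags, lifting) Int_iff mem_Collect_eq not_le)
  have psi0': "psi x0 \<le> 0"
  proof (rule ccontr)
    assume "\<not> psi x0 \<le> 0"
    then have pos: "psi x0 > 0" by simp
    have "continuous (at x0) psi"
      using smooth_cont[OF U(3)] U(1) U(2) continuous_on_eq_continuous_at by blast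
    then obtain e where e: "e > 0" "\<And>y. dist y x0 < e \<Longrightarrow> dist (psi y) (psi x0) < psi x0"
      using pos unfolding continuous_at_eps_delta by blast
    obtain e2 where e2: "e2 > 0" "ball x0 e2 \<subseteq> U" using U(1) U(2) open_contains_ball by blast
    have "x0 \<in> closure \<Omega>" using x0 by (simp add: frontier_def)
    then obtain y where y: "y \<in> \<Omega>" "dist y x0 < min e e2"
      using closure_approachable[of x0 \<Omega>] e e2 by (metis min_less_iff_conj)
    have "y \<in> U" using y e2 by (auto simp: dist_commute)
    then have "psi y < 0" using y U(5) by auto
    moreover have "dist (psi y) (psi x0) < psi x0" using e y by simp
    ultimately show False by (simp add: dist_real_def)
  qed
  have psi00: "psi x0 = 0" using psi0 psi0' by simp
  obtain \<delta> C where tb: "\<delta> > 0" "C \<ge> 0" "cball x0 \<delta> \<subseteq> U"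
    "\<And>x. x \<in> cball x0 \<delta> \<Longrightarrow> psi x \<le> psi x0 + pd psi (x - x0) x0 + C * (norm (x - x0) * norm (x - x0))"
    using taylor_bound[OF U(1) U(3) U(2)] by blast
  have pdG: "pd psi h x0 = g0 * (n \<bullet> h)" for h
  proof -
    have "pd psi h x0 = G \<bullet> h" using grad_inner[OF smooth_diff[OF U(3) U(2)]] by (simp add: G_def)
    also have "\<dots> = g0 * (n \<bullet> h)" using g0 by (simp add: nG)
    finally show ?thesis .
  qed
  define r where "r = min (\<delta> / 2) (g0 / (2 * (C + 1)))"
  have r: "r > 0" "r \<le> \<delta> / 2" "2 * r * C \<le> g0"
  proof -
    show "r > 0" using tb g0 by (simp add: r_def)
    show "r \<le> \<delta> / 2" unfolding r_def by (rule min.cobounded1)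
    have "r \<le> g0 / (2 * (C + 1))" unfolding r_def by (rule min.cobounded2)
    then have "r * (2 * (C + 1)) \<le> g0" using tb(2) by (simp add: pos_le_divide_eq)
    moreover have "2 * r * C \<le> r * (2 * (C + 1))" using \<open>r > 0\<close> by (simp add: algebra_simps)
    ultimately show "2 * r * C \<le> g0" by linarith
  qed
  have "ball (x0 - r *\<^sub>R n) r \<subseteq> \<Omega>"
  proof
    fix x assume x: "x \<in> ball (x0 - r *\<^sub>R n) r"
    define d where "d = x - x0"
    have "norm (d + r *\<^sub>R n) < r" using x by (simp add: d_def dist_norm norm_minus_commute algebra_simps)
    then have "(d + r *\<^sub>R n) \<bullet> (d + r *\<^sub>R n) < r * r"
      using r(1) by (simp add: dot_square_norm power2_eq_square mult_strict_mono)
    moreover have "(d + r *\<^sub>R n) \<bullet> (d + r *\<^sub>R n) = d \<bullet> d + 2 * r * (n \<bullet> d) + r * r * (n \<bullet> n)"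
      by (simp add: inner_add_left inner_add_right inner_commute algebra_simps)
    moreover have "n \<bullet> n = 1" using nn by (simp add: power2_norm_eq_inner[symmetric])
    ultimately have "d \<bullet> d + 2 * r * (n \<bullet> d) + r * r < r * r" by simp
    then have nd: "2 * r * (n \<bullet> d) < - (d \<bullet> d)" by simp
    have "norm d \<le> norm (d + r *\<^sub>R n) + norm (r *\<^sub>R n)"
      by (metis add_diff_cancel_right' norm_triangle_ineq4)
    also have "\<dots> < 2 * r" using \<open>norm (d + r *\<^sub>R n) < r\<close> nn r by simp
    finally have "norm d \<le> \<delta>" using r by simp
    then have xc: "x \<in> cball x0 \<delta>" by (simp add: d_def dist_norm norm_minus_commute)
    have "psi x \<le> g0 * (n \<bullet> d) + C * (d \<bullet> d)"
      using tb(4)[OF xc] psi00 pdG by (simp add: d_def dot_square_norm power2_eq_square)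
    moreover have "2 * r * (g0 * (n \<bullet> d) + C * (d \<bullet> d)) < 0"
    proof -
      have "2 * r * (g0 * (n \<bullet> d)) = g0 * (2 * r * (n \<bullet> d))" by (simp add: algebra_simps)
      also have "\<dots> < g0 * (- (d \<bullet> d))" using nd g0 by (rule mult_strict_left_mono)
      finally have a: "2 * r * (g0 * (n \<bullet> d)) < - g0 * (d \<bullet> d)" by simp
      have "2 * r * (C * (d \<bullet> d)) = (2 * r * C) * (d \<bullet> d)" by simp
      also have "\<dots> \<le> g0 * (d \<bullet> d)" using r(3) by (intro mult_right_mono) auto
      finally have b: "2 * r * (C * (d \<bullet> d)) \<le> g0 * (d \<bullet> d)" .
      show ?thesis using a b by (simp add: distrib_left)
    qed
    moreover have "g0 * (n \<bullet> d) + C * (d \<bullet> d) < 0"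
      using \<open>2 * r * (g0 * (n \<bullet> d) + C * (d \<bullet> d)) < 0\<close> r(1) by (simp add: mult_less_0_iff)
    ultimately have "psi x < 0" by linarith
    moreover have "x \<in> U" using xc tb(3) by auto
    ultimately show "x \<in> \<Omega>" using U(5) by auto
  qed
  then show ?thesis using nn r(1) unfolding n_def by blast
qed


lemma lap_pd: "lap phi x = (\<Sum>i\<in>Basis. pd (pd phi i) i x)"
  unfolding lap_def dirD_def pd_def by simp

lemma zero_on_closure:
  fixes f :: "'a::euclidean_space \<Rightarrow> 'b::real_normed_vector"
  assumes "continuous_on (closure S) f" "\<And>x. x \<in> S \<Longrightarrow> f x = 0" "x \<in> closure S"
  shows "f x = 0"
  using continuous_on_closure_norm_le[OF assms(1), of 0 x] assms by auto

lemma neumann: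
  fixes phi :: "'a::euclidean_space \<Rightarrow> real" and \<Omega> :: "'a set"
  assumes oO: "open \<Omega>" and bO: "bounded \<Omega>" and cO: "connected \<Omega>" and neO: "\<Omega> \<noteq> {}"
    and sb: "smooth_boundary_normal \<Omega> nrm"
    and o: "open V" and cV: "closure \<Omega> \<subseteq> V" and s: "smooth_on_set V phi"
    and harm: "\<And>x. x \<in> \<Omega> \<Longrightarrow> lap phi x = 0"
    and bc: "\<And>x. x \<in> frontier \<Omega> \<Longrightarrow> nrm x \<bullet> grad phi x = 0"
  shows "\<forall>x\<in>closure \<Omega>. grad phi x = 0"
proof -
  have OV: "\<Omega> \<subseteq> V" using cV closure_subset by blast
  have cc: "compact (closure \<Omega>)" using bO by (simp add: compact_closure)
  have cphi: "continuous_on (closure \<Omega>) phi" using continuous_on_subset[OF smooth_cont[OF s] cV] .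
  obtain xm where xm: "xm \<in> closure \<Omega>" "\<And>x. x \<in> closure \<Omega> \<Longrightarrow> phi x \<le> phi xm"
    using continuous_attains_sup[OF cc _ cphi] neO by fastforce
  have leO: "phi x \<le> phi xm" if "x \<in> \<Omega>" for x using xm(2) closure_subset that by blast
  have const: "\<forall>x\<in>\<Omega>. phi x = phi xm"
  proof (cases "\<exists>x1\<in>\<Omega>. phi x1 = phi xm")
    case True
    then obtain x1 where "x1 \<in> \<Omega>" "phi x1 = phi xm" by blast
    then show ?thesis
      using smp[OF o s OV oO cO, of "phi xm" x1] harm leO by (simp add: lap_pd)
  next
    case False
    then have lt: "phi x < phi xm" if "x \<in> \<Omega>" for x using leO[OF that] that by force
    have "xm \<notin> \<Omega>" using False by blast
    then have xf: "xm \<in> frontier \<Omega>" using xm(1) closure_Un_frontier by auto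
    obtain r where r: "r > 0" "ball (xm - r *\<^sub>R nrm xm) r \<subseteq> \<Omega>" and nn: "norm (nrm xm) = 1"
      using interior_ball[OF sb oO xf] by blast
    define y where "y = xm - r *\<^sub>R nrm xm"
    have dy: "dist y xm = r" using nn r by (simp add: y_def dist_norm)
    have "cball y r \<subseteq> closure \<Omega>"
      using closure_mono[OF r(2)] r by (simp add: y_def)
    then have cbV: "cball y r \<subseteq> V" using cV by blast
    have "pd phi (xm - y) xm > 0"
    proof (rule hopf[OF o s cbV r(1) _ dy])
      fix x assume x: "x \<in> ball y r"
      then have xO: "x \<in> \<Omega>" using r(2) by (auto simp: y_def)
      show "0 \<le> (\<Sum>i\<in>Basis. pd (pd phi i) i x)" using harm[OF xO] by (simp add: lap_pd)
      show "phi x < phi xm" using lt[OF xO] .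
    qed
    moreover have "pd phi (xm - y) xm = r * pd phi (nrm xm) xm"
      using fd_scale_dir[OF smooth_diff[OF s], of xm r "nrm xm"] xm(1) cV by (auto simp: y_def pd_def)
    moreover have "pd phi (nrm xm) xm = 0"
      using grad_inner[OF smooth_diff[OF s], of xm "nrm xm"] bc[OF xf] xm(1) cV by (auto simp: inner_commute)
    ultimately show ?thesis by simp
  qed
  have pd0: "pd phi h x = 0" if "x \<in> \<Omega>" for x h
    by (rule max_pd_zero[OF oO that smooth_diff[OF s]]) (use that OV const in auto)
  have pdc: "pd phi h x = 0" if "x \<in> closure \<Omega>" for x h
    by (rule zero_on_closure[OF continuous_on_subset[OF smooth_cont[OF smooth_pd[OF o s]] cV] _ that])
       (use pd0 in auto)
  show ?thesis
  proof
    fix x assume x: "x \<in> closure \<Omega>"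
    show "grad phi x = 0" unfolding grad_def dirD_def using pdc[OF x] by (simp add: pd_def)
  qed
qed


lemma pd_add: "F differentiable (at p) \<Longrightarrow> G differentiable (at p) \<Longrightarrow>
  pd (\<lambda>q. F q + G q) a p = pd F a p + pd G a p"
  unfolding pd_def by (rule fd_add)

lemma pd_diff: "F differentiable (at p) \<Longrightarrow> G differentiable (at p) \<Longrightarrow>
  pd (\<lambda>q. F q - G q) a p = pd F a p - pd G a p"
  unfolding pd_def by (rule fd_diff)

lemma pd_minus: "F differentiable (at p) \<Longrightarrow> pd (\<lambda>q. - F q) a p = - pd F a p"
  unfolding pd_def by (rule fd_minus)

lemma pd_scaleR: "F differentiable (at p) \<Longrightarrow> pd (\<lambda>q. c *\<^sub>R F q) a p = c *\<^sub>R pd F a p"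
  unfolding pd_def by (rule fd_scaleR)

lemma pd_scaleR_left: "(F :: _ \<Rightarrow> real) differentiable (at p) \<Longrightarrow> pd (\<lambda>q. F q *\<^sub>R c) a p = pd F a p *\<^sub>R c"
  unfolding pd_def by (rule fd_scaleR_left)

lemma pd_inner: "F differentiable (at p) \<Longrightarrow> pd (\<lambda>q. F q \<bullet> c) a p = pd F a p \<bullet> c"
  unfolding pd_def by (rule fd_inner)

lemma pd_sum: "finite I \<Longrightarrow> (\<And>i. i \<in> I \<Longrightarrow> F i differentiable (at p)) \<Longrightarrow>
  pd (\<lambda>q. \<Sum>i\<in>I. F i q) a p = (\<Sum>i\<in>I. pd (F i) a p)"
  unfolding pd_def by (rule fd_sum)

lemma pd_zero_dir: "F differentiable (at p) \<Longrightarrow> pd F 0 p = 0"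
  unfolding pd_def by (rule fd_zero_dir)

lemma pd_scale_dir: "F differentiable (at p) \<Longrightarrow> pd F (c *\<^sub>R a) p = c *\<^sub>R pd F a p"
  unfolding pd_def by (rule fd_scale_dir)

lemma pd_pair_expand:
  fixes F :: "real \<times> 'a::euclidean_space \<Rightarrow> 'b::real_normed_vector"
  assumes d: "F differentiable (at p)"
  shows "pd F (0, h) p = (\<Sum>i\<in>Basis. (h \<bullet> i) *\<^sub>R pd F (0, i) p)"
proof -
  have l0: "linear (\<lambda>h::'a. (0::real, h))"
    by (rule linearI) (simp_all add: zero_prod_def)
  have l: "linear (\<lambda>h. frechet_derivative F (at p) (0::real, h))"
    using linear_compose[OF l0 fd_linear[OF d]] by (simp add: o_def)
  have "pd F (0, h) p = frechet_derivative F (at p) (0, \<Sum>i\<in>Basis. (h \<bullet> i) *\<^sub>R i)"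
    by (simp add: pd_def euclidean_representation)
  also have "\<dots> = (\<Sum>i\<in>Basis. (h \<bullet> i) *\<^sub>R frechet_derivative F (at p) (0, i))"
    using linear_sum[OF l, of "\<lambda>i. (h \<bullet> i) *\<^sub>R i" Basis] linear_scale[OF l] by simp
  finally show ?thesis by (simp add: pd_def)
qed

definition DW :: "(real \<times> 'a::euclidean_space \<Rightarrow> 'a) \<Rightarrow> real \<times> 'a \<Rightarrow> real" where
  "DW W q = (\<Sum>j\<in>Basis. pd W (0, j) q \<bullet> j)"
definition LW :: "(real \<times> 'a::euclidean_space \<Rightarrow> 'a) \<Rightarrow> real \<times> 'a \<Rightarrow> 'a" where
  "LW W q = (\<Sum>i\<in>Basis. pd (pd W (0, i)) (0, i) q)"

context
  fixes V :: "(real \<times> 'a::euclidean_space) set" and W :: "real \<times> 'a \<Rightarrow> 'a"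
  assumes o: "open V" and s: "smooth_on_set V W"
begin

lemma smooth_DW: "smooth_on_set V (DW W)"
  unfolding DW_def[abs_def] by (intro smooth_sum[OF o] smooth_inner[OF o] smooth_pd[OF o s]) auto

lemma smooth_LW: "smooth_on_set V (LW W)"
  unfolding LW_def[abs_def] by (intro smooth_sum[OF o] smooth_pd[OF o] smooth_pd[OF o s]) auto

lemma pd_DW: "q \<in> V \<Longrightarrow> pd (DW W) a q = (\<Sum>j\<in>Basis. pd (pd W (0, j)) a q \<bullet> j)"
proof -
  assume q: "q \<in> V"
  have "pd (DW W) a q = (\<Sum>j\<in>Basis. pd (\<lambda>q. pd W (0, j) q \<bullet> j) a q)"
    unfolding DW_def[abs_def]
    by (rule pd_sum) (auto intro!: diff_lin[where L="\<lambda>v. v \<bullet> _"] bounded_linear_inner_left smooth_pd_diff[OF o s q])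
  also have "\<dots> = (\<Sum>j\<in>Basis. pd (pd W (0, j)) a q \<bullet> j)"
    by (intro sum.cong refl pd_inner smooth_pd_diff[OF o s q])
  finally show ?thesis .
qed

lemma div_time: "p \<in> V \<Longrightarrow> (\<Sum>j\<in>Basis. pd (pd W (1, 0)) (0, j) p \<bullet> j) = pd (DW W) (1, 0) p"
  unfolding pd_DW using pd_schwarz[OF o s] by simp

lemma triple: "p \<in> V \<Longrightarrow> pd (pd (pd W a) a) b p = pd (pd (pd W b) a) a p"
proof -
  assume p: "p \<in> V"
  have "pd (pd (pd W a) a) b p = pd (pd (pd W a) b) a p"
    by (rule pd_schwarz[OF o smooth_pd[OF o s] p])
  also have "\<dots> = pd (pd (pd W b) a) a p"
    by (rule pd_cong_fun[OF o smooth_pd[OF o smooth_pd[OF o s]] _ p]) (rule pd_schwarz[OF o s])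
  finally show ?thesis .
qed

lemma div_lap: "p \<in> V \<Longrightarrow> (\<Sum>j\<in>Basis. pd (LW W) (0, j) p \<bullet> j) = (\<Sum>i\<in>Basis. pd (pd (DW W) (0, i)) (0, i) p)"
proof -
  assume p: "p \<in> V"
  have lhs: "pd (LW W) (0, j) p = (\<Sum>i\<in>Basis. pd (pd (pd W (0, i)) (0, i)) (0, j) p)" for j
    unfolding LW_def[abs_def]
    by (rule pd_sum) (auto intro!: smooth_pd_diff[OF o smooth_pd[OF o s] p])
  have sm: "smooth_on_set V (\<lambda>q. \<Sum>j\<in>Basis. pd (pd W (0, j)) (0, i) q \<bullet> j)" for i
    by (intro smooth_sum[OF o] smooth_inner[OF o] smooth_pd[OF o] smooth_pd[OF o s]) auto
  have rhs: "pd (pd (DW W) (0, i)) (0, i) p = (\<Sum>j\<in>Basis. pd (pd (pd W (0, j)) (0, i)) (0, i) p \<bullet> j)" for i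
  proof -
    have "pd (pd (DW W) (0, i)) (0, i) p = pd (\<lambda>q. \<Sum>j\<in>Basis. pd (pd W (0, j)) (0, i) q \<bullet> j) (0, i) p"
      by (rule pd_cong_fun[OF o sm _ p]) (simp add: pd_DW)
    also have "\<dots> = (\<Sum>j\<in>Basis. pd (\<lambda>q. pd (pd W (0, j)) (0, i) q \<bullet> j) (0, i) p)"
      by (rule pd_sum) (auto intro!: diff_lin[where L="\<lambda>v. v \<bullet> _"] bounded_linear_inner_left smooth_pd_diff[OF o smooth_pd[OF o s] p])
    also have "\<dots> = (\<Sum>j\<in>Basis. pd (pd (pd W (0, j)) (0, i)) (0, i) p \<bullet> j)"
      by (intro sum.cong refl pd_inner smooth_pd_diff[OF o smooth_pd[OF o s] p])
    finally show ?thesis .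
  qed
  have "(\<Sum>j\<in>Basis. pd (LW W) (0, j) p \<bullet> j) = (\<Sum>j\<in>Basis. \<Sum>i\<in>Basis. pd (pd (pd W (0, i)) (0, i)) (0, j) p \<bullet> j)"
    by (simp add: lhs inner_sum_left)
  also have "\<dots> = (\<Sum>j\<in>Basis. \<Sum>i\<in>Basis. pd (pd (pd W (0, j)) (0, i)) (0, i) p \<bullet> j)"
    using triple[OF p] by simp
  also have "\<dots> = (\<Sum>i\<in>Basis. \<Sum>j\<in>Basis. pd (pd (pd W (0, j)) (0, i)) (0, i) p \<bullet> j)"
    by (rule sum.swap)
  also have "\<dots> = (\<Sum>i\<in>Basis. pd (pd (DW W) (0, i)) (0, i) p)" by (simp add: rhs)
  finally show ?thesis .
qed

end

lemma divg_add: "f differentiable (at x) \<Longrightarrow> g differentiable (at x) \<Longrightarrow>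
  divg (\<lambda>y. f y + g y) x = divg f x + divg g x"
  unfolding divg_def dirD_def by (simp add: fd_add inner_add_left sum.distrib)

lemma divg_diff: "f differentiable (at x) \<Longrightarrow> g differentiable (at x) \<Longrightarrow>
  divg (\<lambda>y. f y - g y) x = divg f x - divg g x"
  unfolding divg_def dirD_def by (simp add: fd_diff inner_diff_left sum_subtractf)

lemma divg_scaleR: "f differentiable (at x) \<Longrightarrow> divg (\<lambda>y. c *\<^sub>R f y) x = c * divg f x"
  unfolding divg_def dirD_def by (simp add: fd_scaleR sum_distrib_left)

lemma grad_diff: "(\<And>i. i \<in> Basis \<Longrightarrow> (\<lambda>y. dirD f y i) differentiable (at x)) \<Longrightarrow> grad f differentiable (at x)"
  unfolding grad_def[abs_def]
  by (intro diff_sum) (auto intro!: differentiable_scaleR differentiable_const)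

lemma divg_grad: "(\<And>i. i \<in> Basis \<Longrightarrow> (\<lambda>y. dirD f y i) differentiable (at x)) \<Longrightarrow> divg (grad f) x = lap f x"
proof -
  assume d: "\<And>i. i \<in> Basis \<Longrightarrow> (\<lambda>y. dirD f y i) differentiable (at x)"
  have "dirD (grad f) x j = (\<Sum>i\<in>Basis. dirD (\<lambda>y. dirD f y i) x j *\<^sub>R i)" if "j \<in> Basis" for j
  proof -
    have "dirD (grad f) x j = (\<Sum>i\<in>Basis. frechet_derivative (\<lambda>y. dirD f y i *\<^sub>R i) (at x) j)"
      unfolding dirD_def[of "grad f"] unfolding grad_def[abs_def]
      by (rule fd_sum) (auto intro!: differentiable_scaleR d)
    also have "\<dots> = (\<Sum>i\<in>Basis. dirD (\<lambda>y. dirD f y i) x j *\<^sub>R i)"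
      by (intro sum.cong refl) (simp add: fd_scaleR_left d dirD_def[of "\<lambda>y. dirD f y _"])
    finally show ?thesis .
  qed
  then have "divg (grad f) x = (\<Sum>j\<in>Basis. (\<Sum>i\<in>Basis. dirD (\<lambda>y. dirD f y i) x j *\<^sub>R i) \<bullet> j)"
    unfolding divg_def by simp
  also have "\<dots> = (\<Sum>j\<in>Basis. dirD (\<lambda>y. dirD f y j) x j)"
    by (intro sum.cong refl) (simp add: inner_sum_left inner_Basis if_distrib sum.delta cong: if_cong)
  finally show ?thesis unfolding lap_def .
qed

lemma zero_dt: fixes f :: "real \<Rightarrow> 'b::euclidean_space" shows "(t0::real) < T \<Longrightarrow> t \<in> {t0..T} \<Longrightarrow> (\<And>s. s \<in> {t0..T} \<Longrightarrow> f s = 0) \<Longrightarrow>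
  vector_derivative f (at t within {t0..T}) = 0"
proof -
  assume a: "t0 < T" "t \<in> {t0..T}" "\<And>s. s \<in> {t0..T} \<Longrightarrow> f s = 0"
  have "((\<lambda>s. 0) has_vector_derivative 0) (at t within {t0..T})" by (rule has_vector_derivative_const)
  have "(f has_vector_derivative 0) (at t within {t0..T})"
    by (rule has_vector_derivative_transform[OF a(2) _ \<open>((\<lambda>s. 0) has_vector_derivative 0) (at t within {t0..T})\<close>]) (use a(3) in auto)
  then show ?thesis by (rule vector_derivative_within_closed_interval[OF a(1) a(2)])
qed

lemma slice_cont: "continuous_on V H \<Longrightarrow> (\<And>y. y \<in> S \<Longrightarrow> (t, y) \<in> V) \<Longrightarrow> continuous_on S (\<lambda>y. H (t, y))"
proof -
  assume c: "continuous_on V H" and i: "\<And>y. y \<in> S \<Longrightarrow> (t, y) \<in> V"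
  have "continuous_on S (\<lambda>y. (t, y))" by (intro continuous_intros)
  then show ?thesis by (rule continuous_on_compose2[OF c]) (use i in auto)
qed


context
  fixes V :: "(real \<times> 'a::euclidean_space) set"
  assumes o: "open V"
begin

lemma tr_diff: "smooth_on_set V (case_prod w) \<Longrightarrow> (t, x) \<in> V \<Longrightarrow> (w t :: 'a \<Rightarrow> 'b::euclidean_space) differentiable (at x)"
  using sl_diff[OF o, of "case_prod w" t x] by simp

lemma tr_dirD_diff: "smooth_on_set V (case_prod w) \<Longrightarrow> (t, x) \<in> V \<Longrightarrow>
  (\<lambda>y. dirD (w t :: 'a \<Rightarrow> 'b::euclidean_space) y h) differentiable (at x)"
  using sl_dirD_diff[OF o, of "case_prod w" t x h] by simp

lemma tr_divg: "smooth_on_set V (case_prod w) \<Longrightarrow> (t, x) \<in> V \<Longrightarrow>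
  divg (w t) x = (\<Sum>i\<in>Basis. pd (case_prod w) (0, i) (t, x) \<bullet> i)"
  using sl_divg[OF o, of "case_prod w" t x] by simp

lemma tr_lap: "smooth_on_set V (case_prod w) \<Longrightarrow> (t, x) \<in> V \<Longrightarrow>
  lap (w t :: 'a \<Rightarrow> 'a) x = LW (case_prod w) (t, x)"
  using sl_lap[OF o, of "case_prod w" t x] by (simp add: LW_def)

lemma tr_grad: "smooth_on_set V (case_prod q) \<Longrightarrow> (t, x) \<in> V \<Longrightarrow>
  grad (q t) x = (\<Sum>i\<in>Basis. pd (case_prod q) (0, i) (t, x) *\<^sub>R i)"
  using sl_grad[OF o, of "case_prod q" t x] by simp

lemma tr_conv: "smooth_on_set V (case_prod w) \<Longrightarrow> (t, x) \<in> V \<Longrightarrow>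
  conv v (w t :: 'a \<Rightarrow> 'b::euclidean_space) x = pd (case_prod w) (0, v x) (t, x)"
  using sl_conv[OF o, of "case_prod w" t x] by simp

lemma tr_dt: "smooth_on_set V (case_prod w) \<Longrightarrow> t0 < T \<Longrightarrow> t \<in> {t0..T} \<Longrightarrow> (t, x) \<in> V \<Longrightarrow>
  dt t0 T (w :: real \<Rightarrow> 'a \<Rightarrow> 'b::euclidean_space) t x = pd (case_prod w) (1, 0) (t, x)"
  using sl_dt[OF o, of "case_prod w" t0 T t x] by simp

lemma tr_DW: "smooth_on_set V (case_prod w) \<Longrightarrow> (t, x) \<in> V \<Longrightarrow> divg (w t) x = DW (case_prod w) (t, x)"
  using tr_divg by (simp add: DW_def)

lemma conv_expand: "smooth_on_set V (case_prod (w :: real \<Rightarrow> 'a \<Rightarrow> 'b::euclidean_space)) \<Longrightarrow> (t, x) \<in> V \<Longrightarrow>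
  conv (u t) (w t) x = (\<Sum>i\<in>Basis. (u t x \<bullet> i) *\<^sub>R pd (case_prod w) (0, i) (t, x))"
proof -
  assume s: "smooth_on_set V (case_prod w)" and p: "(t, x) \<in> V"
  have "conv (u t) (w t) x = pd (case_prod w) (0, u t x) (t, x)" by (rule tr_conv[OF s p])
  also have "\<dots> = (\<Sum>i\<in>Basis. (u t x \<bullet> i) *\<^sub>R pd (case_prod w) (0, i) (t, x))"
    by (rule pd_pair_expand[OF smooth_diff[OF s p]])
  finally show ?thesis .
qed

end


lemma lap_zero: "lap (\<lambda>y. 0 :: 'b::real_normed_vector) x = 0"
  unfolding lap_def dirD_def by simp

lemma grad_zero: "grad (\<lambda>y. 0) x = 0"
  unfolding grad_def dirD_def by simp

lemma smooth_on_const0: "smooth_on_set UNIV (\<lambda>x. 0 :: real)"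
  by (rule smooth_const)

lemma dir2:
  fixes \<Omega> :: "'a::euclidean_space set" and g u :: "real \<Rightarrow> 'a \<Rightarrow> 'a" and p :: "real \<Rightarrow> 'a \<Rightarrow> real"
  assumes oO: "open \<Omega>" and tT: "t0 < T" and o: "open V" and KV: "{t0..T} \<times> closure \<Omega> \<subseteq> V"
    and sg: "smooth_on_set V (case_prod g)" and su: "smooth_on_set V (case_prod u)"
    and sp: "smooth_on_set V (case_prod p)"
    and ins: "INSE_noslip \<Omega> \<nu> g t0 T u p"
  shows "GePUP_E \<Omega> nrm \<nu> lam g t0 T u u p"
proof -
  have Vc: "(t, x) \<in> V" if "t \<in> {t0..T}" "x \<in> closure \<Omega>" for t x using KV that by auto
  have VO: "(t, x) \<in> V" if "t \<in> {t0..T}" "x \<in> \<Omega>" for t x using Vc that closure_subset by auto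
  have mom: "dt t0 T u t x + conv (u t) (u t) x = g t x - grad (p t) x + \<nu> *\<^sub>R lap (u t) x"
    if "t \<in> {t0..T}" "x \<in> \<Omega>" for t x using ins that unfolding INSE_noslip_def by blast
  have div0: "divg (u t) x = 0" if "t \<in> {t0..T}" "x \<in> \<Omega>" for t x using ins that unfolding INSE_noslip_def by blast
  have bd0: "u t x = 0" if "t \<in> {t0..T}" "x \<in> frontier \<Omega>" for t x using ins that unfolding INSE_noslip_def by blast
  let ?U = "case_prod u" and ?G = "case_prod g" and ?P = "case_prod p"
  have DU0: "DW ?U (t, x) = 0" if "t \<in> {t0..T}" "x \<in> \<Omega>" for t x
    using tr_DW[OF o su VO[OF that]] div0[OF that] by simp
  have DUc: "DW ?U (t, x) = 0" if "t \<in> {t0..T}" "x \<in> closure \<Omega>" for t x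
    by (rule zero_on_closure[OF slice_cont[OF smooth_cont[OF smooth_DW[OF o su]]] _ that(2)])
       (use Vc[OF that(1)] DU0[OF that(1)] in auto)
  show ?thesis unfolding GePUP_E_def
  proof (rule conjI, rule ballI)
    fix t assume t: "t \<in> {t0..T}"
    show "(\<forall>x\<in>\<Omega>. dt t0 T u t x = g t x - conv (u t) (u t) x - grad (p t) x + \<nu> *\<^sub>R lap (u t) x) \<and>
        (\<forall>x\<in>frontier \<Omega>. (\<forall>\<tau>. norm \<tau> = 1 \<and> \<tau> \<bullet> nrm x = 0 \<longrightarrow> u t x \<bullet> \<tau> = 0) \<and> divg (u t) x = 0) \<and>
        leray_proj \<Omega> nrm (u t) (u t) \<and>
        (\<forall>x\<in>frontier \<Omega>. u t x \<bullet> nrm x = 0) \<and>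
        (\<forall>x\<in>\<Omega>. lap (p t) x = divg (\<lambda>y. g t y - conv (u t) (u t) y) x) \<and>
        (\<forall>x\<in>frontier \<Omega>. nrm x \<bullet> grad (p t) x =
            nrm x \<bullet> (g t x - conv (u t) (u t) x + \<nu> *\<^sub>R lap (u t) x) + lam * (nrm x \<bullet> u t x))"
    proof (intro conjI)
    show "\<forall>x\<in>\<Omega>. dt t0 T u t x = g t x - conv (u t) (u t) x - grad (p t) x + \<nu> *\<^sub>R lap (u t) x"
    proof
      fix x assume x: "x \<in> \<Omega>"
      have "dt t0 T u t x = (dt t0 T u t x + conv (u t) (u t) x) - conv (u t) (u t) x" by simp
      also have "\<dots> = g t x - grad (p t) x + \<nu> *\<^sub>R lap (u t) x - conv (u t) (u t) x" using mom[OF t x] by simp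
      finally show "dt t0 T u t x = g t x - conv (u t) (u t) x - grad (p t) x + \<nu> *\<^sub>R lap (u t) x"
        by (simp add: algebra_simps)
    qed
    show "\<forall>x\<in>frontier \<Omega>. (\<forall>\<tau>. norm \<tau> = 1 \<and> \<tau> \<bullet> nrm x = 0 \<longrightarrow> u t x \<bullet> \<tau> = 0) \<and> divg (u t) x = 0"
    proof
      fix x assume x: "x \<in> frontier \<Omega>"
      have xc: "x \<in> closure \<Omega>" using x by (simp add: frontier_def)
      show "(\<forall>\<tau>. norm \<tau> = 1 \<and> \<tau> \<bullet> nrm x = 0 \<longrightarrow> u t x \<bullet> \<tau> = 0) \<and> divg (u t) x = 0"
        using bd0[OF t x] tr_DW[OF o su Vc[OF t xc]] DUc[OF t xc] by simp
    qed
    \<comment> \<open>Leray projection with phi = 0\<close>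
    show "leray_proj \<Omega> nrm (u t) (u t)"
      unfolding leray_proj_def
    proof (intro exI[of _ "\<lambda>x. 0"] conjI ballI)
      show "\<exists>V. open V \<and> closure \<Omega> \<subseteq> V \<and> smooth_on_set V (\<lambda>x. 0 :: real)"
        using smooth_on_const0 by blast
      fix x
      show "x \<in> \<Omega> \<Longrightarrow> lap (\<lambda>x. 0) x = divg (u t) x" using div0[OF t] by (simp add: lap_zero)
      show "x \<in> frontier \<Omega> \<Longrightarrow> nrm x \<bullet> grad (\<lambda>x. 0) x = nrm x \<bullet> u t x" using bd0[OF t] by (simp add: grad_zero)
      show "x \<in> closure \<Omega> \<Longrightarrow> u t x = u t x - grad (\<lambda>x. 0) x" by (simp add: grad_zero)
    qed
    show "\<forall>x\<in>frontier \<Omega>. u t x \<bullet> nrm x = 0" using bd0[OF t] by simp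
    show "\<forall>x\<in>\<Omega>. lap (p t) x = divg (\<lambda>y. g t y - conv (u t) (u t) y) x"
    proof
      fix x assume x: "x \<in> \<Omega>"
      have tx: "(t, x) \<in> V" using VO[OF t x] .
      define X where "X y = pd ?U (1, 0) (t, y)" for y
      define Z where "Z y = LW ?U (t, y)" for y
      have dX: "X differentiable (at x)"
        unfolding X_def by (rule sl_diff[OF o smooth_pd[OF o su] tx])
      have dZ: "Z differentiable (at x)"
        unfolding Z_def by (rule sl_diff[OF o smooth_LW[OF o su] tx])
      have dG: "grad (p t) differentiable (at x)"
        by (rule grad_diff) (rule tr_dirD_diff[OF o sp tx])
      have eqA: "g t y - conv (u t) (u t) y = X y + grad (p t) y - \<nu> *\<^sub>R Z y" if y: "y \<in> \<Omega>" for y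
      proof -
        have "dt t0 T u t y = X y" unfolding X_def by (rule tr_dt[OF o su tT t VO[OF t y]])
        moreover have "lap (u t) y = Z y" unfolding Z_def by (rule tr_lap[OF o su VO[OF t y]])
        ultimately show ?thesis using mom[OF t y] by (simp add: algebra_simps)
      qed
      have "divg (\<lambda>y. g t y - conv (u t) (u t) y) x = divg (\<lambda>y. X y + grad (p t) y - \<nu> *\<^sub>R Z y) x"
      proof -
        have dR: "(\<lambda>y. X y + grad (p t) y - \<nu> *\<^sub>R Z y) differentiable (at x)"
          using dX dG dZ by (intro differentiable_diff differentiable_add differentiable_scaleR differentiable_const) auto
        show ?thesis by (rule divg_cong[OF oO x _ dR]) (rule eqA)
      qed
      also have "\<dots> = divg X x + divg (grad (p t)) x - \<nu> * divg Z x"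
        using dX dG dZ by (simp add: divg_diff divg_add divg_scaleR differentiable_add differentiable_scaleR)
      also have "divg X x = 0"
      proof -
        have "divg X x = (\<Sum>j\<in>Basis. pd (pd ?U (1, 0)) (0, j) (t, x) \<bullet> j)"
          unfolding X_def by (rule sl_divg[OF o smooth_pd[OF o su] tx])
        also have "\<dots> = pd (DW ?U) (1, 0) (t, x)" by (rule div_time[OF o su tx])
        also have "\<dots> = dt t0 T (\<lambda>s y. DW ?U (s, y)) t x"
          by (rule sl_dt[OF o smooth_DW[OF o su] tT t tx, symmetric])
        also have "\<dots> = 0" unfolding dt_def
          by (rule zero_dt[OF tT t]) (use DU0 x in auto)
        finally show ?thesis .
      qed
      also have "divg (grad (p t)) x = lap (p t) x"
        by (rule divg_grad) (rule tr_dirD_diff[OF o sp tx])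
      also have "divg Z x = 0"
      proof -
        have "divg Z x = (\<Sum>j\<in>Basis. pd (LW ?U) (0, j) (t, x) \<bullet> j)"
          unfolding Z_def by (rule sl_divg[OF o smooth_LW[OF o su] tx])
        also have "\<dots> = (\<Sum>i\<in>Basis. pd (pd (DW ?U) (0, i)) (0, i) (t, x))" by (rule div_lap[OF o su tx])
        also have "\<dots> = lap (\<lambda>y. DW ?U (t, y)) x" by (rule sl_lap[OF o smooth_DW[OF o su] tx, symmetric])
        also have "\<dots> = lap (\<lambda>y. 0 :: real) x"
          by (rule lap_cong[OF oO x]) (use DU0[OF t] in \<open>auto simp: dirD_def\<close>)
        also have "\<dots> = 0" by (rule lap_zero)
        finally show ?thesis .
      qed
      finally show "lap (p t) x = divg (\<lambda>y. g t y - conv (u t) (u t) y) x" by simp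
    qed
    show "\<forall>x\<in>frontier \<Omega>. nrm x \<bullet> grad (p t) x =
            nrm x \<bullet> (g t x - conv (u t) (u t) x + \<nu> *\<^sub>R lap (u t) x) + lam * (nrm x \<bullet> u t x)"
    proof
      fix x assume x: "x \<in> frontier \<Omega>"
      have xc: "x \<in> closure \<Omega>" using x by (simp add: frontier_def)
      have tx: "(t, x) \<in> V" using Vc[OF t xc] .
      define Mom where "Mom q = pd ?U (1, 0) q + (\<Sum>i\<in>Basis. (?U q \<bullet> i) *\<^sub>R pd ?U (0, i) q) - ?G q
          + (\<Sum>i\<in>Basis. pd ?P (0, i) q *\<^sub>R i) - \<nu> *\<^sub>R LW ?U q" for q
      have cM: "continuous_on V Mom" unfolding Mom_def
        by (intro continuous_intros smooth_cont smooth_pd[OF o su] smooth_pd[OF o sp] sg su smooth_LW[OF o su])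
      have M0: "Mom (t, y) = 0" if y: "y \<in> \<Omega>" for y
      proof -
        have ty: "(t, y) \<in> V" using VO[OF t y] .
        have "dt t0 T u t y = pd ?U (1, 0) (t, y)" by (rule tr_dt[OF o su tT t ty])
        moreover have "conv (u t) (u t) y = (\<Sum>i\<in>Basis. (?U (t, y) \<bullet> i) *\<^sub>R pd ?U (0, i) (t, y))"
          using conv_expand[OF o su ty] by simp
        moreover have "grad (p t) y = (\<Sum>i\<in>Basis. pd ?P (0, i) (t, y) *\<^sub>R i)" by (rule tr_grad[OF o sp ty])
        moreover have "lap (u t) y = LW ?U (t, y)" by (rule tr_lap[OF o su ty])
        ultimately show ?thesis using mom[OF t y] unfolding Mom_def by (simp add: algebra_simps)
      qed
      have "Mom (t, x) = 0"
        by (rule zero_on_closure[OF slice_cont[OF cM] _ xc]) (use Vc[OF t] M0 in auto)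
      moreover have "pd ?U (1, 0) (t, x) = 0"
      proof -
        have "pd ?U (1, 0) (t, x) = dt t0 T u t x" by (rule tr_dt[OF o su tT t tx, symmetric])
        also have "\<dots> = 0" unfolding dt_def by (rule zero_dt[OF tT t]) (use bd0 x in auto)
        finally show ?thesis .
      qed
      moreover have "?U (t, x) = 0" using bd0[OF t x] by simp
      ultimately have gr: "(\<Sum>i\<in>Basis. pd ?P (0, i) (t, x) *\<^sub>R i) = ?G (t, x) + \<nu> *\<^sub>R LW ?U (t, x)"
        unfolding Mom_def by (simp add: algebra_simps)
      have "grad (p t) x = g t x + \<nu> *\<^sub>R lap (u t) x"
        using gr tr_grad[OF o sp tx] tr_lap[OF o su tx] by simp
      moreover have "conv (u t) (u t) x = 0"
        using conv_expand[OF o su tx] bd0[OF t x] by simp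
      ultimately show "nrm x \<bullet> grad (p t) x =
            nrm x \<bullet> (g t x - conv (u t) (u t) x + \<nu> *\<^sub>R lap (u t) x) + lam * (nrm x \<bullet> u t x)"
        using bd0[OF t x] by simp
    qed
    qed
  next
    show "\<forall>x\<in>closure \<Omega>. u t0 x = u t0 x" by simp
  qed
qed


lemma dirD_pd: "dirD f y i = pd f i y" by (simp add: dirD_def pd_def)

lemma dir1:
  fixes \<Omega> :: "'a::euclidean_space set" and g w u :: "real \<Rightarrow> 'a \<Rightarrow> 'a" and q :: "real \<Rightarrow> 'a \<Rightarrow> real"
  assumes oO: "open \<Omega>" and bO: "bounded \<Omega>" and cO: "connected \<Omega>" and neO: "\<Omega> \<noteq> {}"
    and sb: "smooth_boundary_normal \<Omega> nrm" and nu: "\<nu> > 0" and lam: "lam \<ge> 0"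
    and tT: "t0 < T" and o: "open V" and KV: "{t0..T} \<times> closure \<Omega> \<subseteq> V"
    and sg: "smooth_on_set V (case_prod g)" and sw: "smooth_on_set V (case_prod w)"
    and su: "smooth_on_set V (case_prod u)" and sq: "smooth_on_set V (case_prod q)"
    and gep: "GePUP_E \<Omega> nrm \<nu> lam g t0 T w u q"
  shows "(\<forall>t\<in>{t0..T}. \<forall>x\<in>closure \<Omega>. w t x = u t x) \<and> INSE_noslip \<Omega> \<nu> g t0 T u q"
proof -
  let ?W = "case_prod w" and ?U = "case_prod u" and ?G = "case_prod g" and ?Q = "case_prod q"
  have Vc: "(t, x) \<in> V" if "t \<in> {t0..T}" "x \<in> closure \<Omega>" for t x using KV that by auto
  have VO: "(t, x) \<in> V" if "t \<in> {t0..T}" "x \<in> \<Omega>" for t x using Vc that closure_subset by auto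
  have fc: "x \<in> closure \<Omega>" if "x \<in> frontier \<Omega>" for x using that by (simp add: frontier_def)
  have mom: "dt t0 T w t x = g t x - conv (u t) (u t) x - grad (q t) x + \<nu> *\<^sub>R lap (w t) x"
    if "t \<in> {t0..T}" "x \<in> \<Omega>" for t x using gep that unfolding GePUP_E_def by blast
  have tang: "w t x \<bullet> \<tau> = 0" if "t \<in> {t0..T}" "x \<in> frontier \<Omega>" "norm \<tau> = 1" "\<tau> \<bullet> nrm x = 0" for t x \<tau>
    using gep that unfolding GePUP_E_def by blast
  have divb: "divg (w t) x = 0" if "t \<in> {t0..T}" "x \<in> frontier \<Omega>" for t x
    using gep that unfolding GePUP_E_def by blast
  have ler: "leray_proj \<Omega> nrm (w t) (u t)" if "t \<in> {t0..T}" for t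
    using gep that unfolding GePUP_E_def by blast
  have un: "u t x \<bullet> nrm x = 0" if "t \<in> {t0..T}" "x \<in> frontier \<Omega>" for t x
    using gep that unfolding GePUP_E_def by blast
  have pres: "lap (q t) x = divg (\<lambda>y. g t y - conv (u t) (u t) y) x" if "t \<in> {t0..T}" "x \<in> \<Omega>" for t x
    using gep that unfolding GePUP_E_def by blast
  have presb: "nrm x \<bullet> grad (q t) x = nrm x \<bullet> (g t x - conv (u t) (u t) x + \<nu> *\<^sub>R lap (w t) x) + lam * (nrm x \<bullet> w t x)"
    if "t \<in> {t0..T}" "x \<in> frontier \<Omega>" for t x
    using gep that unfolding GePUP_E_def by blast
  have init: "w t0 x = u t0 x" if "x \<in> closure \<Omega>" for x
    using gep that unfolding GePUP_E_def by blast
  have t0T: "t0 \<in> {t0..T}" using tT by simp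

  have divu: "divg (u t) x = 0" if t: "t \<in> {t0..T}" and x: "x \<in> \<Omega>" for t x
  proof -
    obtain phi :: "'a \<Rightarrow> real" and Vp where ph: "open Vp" "closure \<Omega> \<subseteq> Vp" "smooth_on_set Vp phi"
      "\<And>x. x \<in> \<Omega> \<Longrightarrow> lap phi x = divg (w t) x"
      "\<And>x. x \<in> closure \<Omega> \<Longrightarrow> u t x = w t x - grad phi x"
      using ler[OF t] unfolding leray_proj_def by metis
    have xV: "x \<in> Vp" using x ph(2) closure_subset by blast
    have dd: "(\<lambda>y. dirD phi y i) differentiable (at x)" for i
      unfolding dirD_pd by (rule smooth_pd_diff[OF ph(1) ph(3) xV])
    have dg: "grad phi differentiable (at x)" by (rule grad_diff) (rule dd)
    have dw: "w t differentiable (at x)" by (rule tr_diff[OF o sw VO[OF t x]])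
    have "divg (u t) x = divg (\<lambda>y. w t y - grad phi y) x"
      by (rule divg_cong[OF oO x _ differentiable_diff[OF dw dg]]) (use ph(5) closure_subset in auto)
    also have "\<dots> = divg (w t) x - lap phi x"
      using divg_diff[OF dw dg] divg_grad[OF dd] by simp
    finally show ?thesis using ph(4)[OF x] by simp
  qed

  \<comment> \<open>Step 2: heat equation for the divergence of w\<close>
  have heat: "pd (DW ?W) (1, 0) (t, x) = \<nu> * (\<Sum>i\<in>Basis. pd (pd (DW ?W) (0, i)) (0, i) (t, x))"
    if t: "t \<in> {t0..T}" and x: "x \<in> \<Omega>" for t x
  proof -
    have tx: "(t, x) \<in> V" using VO[OF t x] .
    define X where "X y = pd ?W (1, 0) (t, y)" for y
    define Z where "Z y = LW ?W (t, y)" for y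
    define A where "A y = g t y - conv (u t) (u t) y" for y
    have dX: "X differentiable (at x)" unfolding X_def by (rule sl_diff[OF o smooth_pd[OF o sw] tx])
    have dZ: "Z differentiable (at x)" unfolding Z_def by (rule sl_diff[OF o smooth_LW[OF o sw] tx])
    have dG: "grad (q t) differentiable (at x)" by (rule grad_diff) (rule tr_dirD_diff[OF o sq tx])
    have dA: "A differentiable (at x)"
    proof -
      define A' where "A' y = g t y - (\<Sum>i\<in>Basis. (?U (t, y) \<bullet> i) *\<^sub>R pd ?U (0, i) (t, y))" for y
      have "A' differentiable (at x)" unfolding A'_def
        by (intro differentiable_diff diff_sum differentiable_scaleR diff_lin[where L="\<lambda>v. v \<bullet> _"]
              bounded_linear_inner_left finite_Basis tr_diff[OF o sg tx]
              sl_diff[OF o su tx] sl_diff[OF o smooth_pd[OF o su] tx])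
      then show ?thesis
        by (rule diff_cong[OF open_slice[OF o] slice_open_mem[OF tx], rotated])
           (simp add: A_def A'_def conv_expand[OF o su])
    qed
    have eq: "X y = A y - grad (q t) y + \<nu> *\<^sub>R Z y" if y: "y \<in> \<Omega>" for y
    proof -
      have "dt t0 T w t y = X y" unfolding X_def by (rule tr_dt[OF o sw tT t VO[OF t y]])
      moreover have "lap (w t) y = Z y" unfolding Z_def by (rule tr_lap[OF o sw VO[OF t y]])
      ultimately show ?thesis using mom[OF t y] by (simp add: A_def)
    qed
    have "pd (DW ?W) (1, 0) (t, x) = (\<Sum>j\<in>Basis. pd (pd ?W (1, 0)) (0, j) (t, x) \<bullet> j)"
      by (rule div_time[OF o sw tx, symmetric])
    also have "\<dots> = divg X x"
      unfolding X_def by (rule sl_divg[OF o smooth_pd[OF o sw] tx, symmetric])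
    also have "\<dots> = divg (\<lambda>y. A y - grad (q t) y + \<nu> *\<^sub>R Z y) x"
    proof -
      have dR: "(\<lambda>y. A y - grad (q t) y + \<nu> *\<^sub>R Z y) differentiable (at x)"
        using dA dG dZ by (intro differentiable_diff differentiable_add differentiable_scaleR differentiable_const) auto
      show ?thesis by (rule divg_cong[OF oO x _ dR]) (rule eq)
    qed
    also have "\<dots> = divg A x - divg (grad (q t)) x + \<nu> * divg Z x"
      using dA dG dZ by (simp add: divg_diff divg_add divg_scaleR differentiable_diff differentiable_scaleR)
    also have "divg A x = lap (q t) x" using pres[OF t x] by (simp add: A_def[abs_def])
    also have "divg (grad (q t)) x = lap (q t) x"
      by (rule divg_grad) (rule tr_dirD_diff[OF o sq tx])
    also have "divg Z x = (\<Sum>i\<in>Basis. pd (pd (DW ?W) (0, i)) (0, i) (t, x))"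
    proof -
      have "divg Z x = (\<Sum>j\<in>Basis. pd (LW ?W) (0, j) (t, x) \<bullet> j)"
        unfolding Z_def by (rule sl_divg[OF o smooth_LW[OF o sw] tx])
      also have "\<dots> = (\<Sum>i\<in>Basis. pd (pd (DW ?W) (0, i)) (0, i) (t, x))" by (rule div_lap[OF o sw tx])
      finally show ?thesis .
    qed
    finally show ?thesis by simp
  qed

  \<comment> \<open>Step 3: maximum principle gives div w = 0\<close>
  have DW0: "DW ?W (t, x) = 0" if t: "t \<in> {t0..T}" and x: "x \<in> closure \<Omega>" for t x
  proof -
    have sD: "smooth_on_set V (DW ?W)" by (rule smooth_DW[OF o sw])
    have initD: "DW ?W (t0, x) = 0" if x: "x \<in> \<Omega>" for x
    proof -
      have "DW ?W (t0, x) = divg (w t0) x" by (rule tr_DW[OF o sw VO[OF t0T x], symmetric])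
      also have "\<dots> = divg (u t0) x"
        by (rule divg_cong[OF oO x _ tr_diff[OF o su VO[OF t0T x]]]) (use init closure_subset in auto)
      also have "\<dots> = 0" by (rule divu[OF t0T x])
      finally show ?thesis .
    qed
    have bdD: "DW ?W (t, x) = 0" if t: "t \<in> {t0..T}" and x: "x \<in> frontier \<Omega>" for t x
      using tr_DW[OF o sw Vc[OF t fc[OF x]]] divb[OF t x] by simp
    have le1: "\<forall>t\<in>{t0..T}. \<forall>x\<in>closure \<Omega>. DW ?W (t, x) \<le> 0"
      by (rule hmp_le[OF o sD KV less_imp_le[OF tT] oO bO less_imp_le[OF nu] heat]) (auto simp: initD bdD)
    have sD': "smooth_on_set V (\<lambda>p. - DW ?W p)" by (rule smooth_minus[OF o sD])
    have heat': "pd (\<lambda>p. - DW ?W p) (1, 0) (t, x) = \<nu> * (\<Sum>i\<in>Basis. pd (pd (\<lambda>p. - DW ?W p) (0, i)) (0, i) (t, x))"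
      if t: "t \<in> {t0..T}" and x: "x \<in> \<Omega>" for t x
    proof -
      have tx: "(t, x) \<in> V" using VO[OF t x] .
      have a: "pd (\<lambda>p. - DW ?W p) (1, 0) (t, x) = - pd (DW ?W) (1, 0) (t, x)"
        by (rule pd_minus[OF smooth_diff[OF sD tx]])
      have b: "pd (pd (\<lambda>p. - DW ?W p) (0, i)) (0, i) (t, x) = - pd (pd (DW ?W) (0, i)) (0, i) (t, x)" for i
      proof -
        have "pd (pd (\<lambda>p. - DW ?W p) (0, i)) (0, i) (t, x) = pd (\<lambda>p. - pd (DW ?W) (0, i) p) (0, i) (t, x)"
          by (rule pd_cong_fun[OF o smooth_minus[OF o smooth_pd[OF o sD]] _ tx])
             (rule pd_minus[OF smooth_diff[OF sD]])
        also have "\<dots> = - pd (pd (DW ?W) (0, i)) (0, i) (t, x)"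
          by (rule pd_minus[OF smooth_pd_diff[OF o sD tx]])
        finally show ?thesis .
      qed
      show ?thesis unfolding a b using heat[OF t x] by (simp add: sum_negf)
    qed
    have le2: "\<forall>t\<in>{t0..T}. \<forall>x\<in>closure \<Omega>. - DW ?W (t, x) \<le> 0"
      by (rule hmp_le[OF o sD' KV less_imp_le[OF tT] oO bO less_imp_le[OF nu] heat']) (auto simp: initD bdD)
    show ?thesis using le1 le2 t x by force
  qed

  have wn0: "w t x \<bullet> nrm x = 0" if t: "t \<in> {t0..T}" and x: "x \<in> frontier \<Omega>" for t x
  proof -
    have xc: "x \<in> closure \<Omega>" using fc[OF x] .
    define Mom where "Mom p = pd ?W (1, 0) p - (?G p - (\<Sum>i\<in>Basis. (?U p \<bullet> i) *\<^sub>R pd ?U (0, i) p)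
          - (\<Sum>i\<in>Basis. pd ?Q (0, i) p *\<^sub>R i) + \<nu> *\<^sub>R LW ?W p)" for p
    have cM: "continuous_on V Mom" unfolding Mom_def
      by (intro continuous_intros smooth_cont smooth_pd[OF o su] smooth_pd[OF o sq] smooth_pd[OF o sw] sg su smooth_LW[OF o sw])
    have momb: "pd ?W (1, 0) (s, x) = g s x - conv (u s) (u s) x - grad (q s) x + \<nu> *\<^sub>R lap (w s) x"
      if s: "s \<in> {t0..T}" for s
    proof -
      have sx: "(s, x) \<in> V" using Vc[OF s xc] .
      have M0: "Mom (s, y) = 0" if y: "y \<in> \<Omega>" for y
      proof -
        have sy: "(s, y) \<in> V" using VO[OF s y] .
        have "dt t0 T w s y = pd ?W (1, 0) (s, y)" by (rule tr_dt[OF o sw tT s sy])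
        moreover have "conv (u s) (u s) y = (\<Sum>i\<in>Basis. (?U (s, y) \<bullet> i) *\<^sub>R pd ?U (0, i) (s, y))"
          using conv_expand[OF o su sy] by simp
        moreover have "grad (q s) y = (\<Sum>i\<in>Basis. pd ?Q (0, i) (s, y) *\<^sub>R i)" by (rule tr_grad[OF o sq sy])
        moreover have "lap (w s) y = LW ?W (s, y)" by (rule tr_lap[OF o sw sy])
        ultimately show ?thesis using mom[OF s y] unfolding Mom_def by simp
      qed
      have "Mom (s, x) = 0"
        by (rule zero_on_closure[OF slice_cont[OF cM] _ xc]) (use Vc[OF s] M0 in auto)
      moreover have "conv (u s) (u s) x = (\<Sum>i\<in>Basis. (?U (s, x) \<bullet> i) *\<^sub>R pd ?U (0, i) (s, x))"
        using conv_expand[OF o su sx] by simp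
      moreover have "grad (q s) x = (\<Sum>i\<in>Basis. pd ?Q (0, i) (s, x) *\<^sub>R i)" by (rule tr_grad[OF o sq sx])
      moreover have "lap (w s) x = LW ?W (s, x)" by (rule tr_lap[OF o sw sx])
      ultimately show ?thesis unfolding Mom_def by simp
    qed
    define f where "f s = ?W (s, x) \<bullet> nrm x" for s
    have fd: "(f has_real_derivative - lam * f s) (at s)" if s: "s \<in> {t0..T}" for s
    proof -
      have sx: "(s, x) \<in> V" using Vc[OF s xc] .
      have sF: "smooth_on_set V (\<lambda>p. ?W p \<bullet> nrm x)" by (rule smooth_inner[OF o sw])
      have "(f has_real_derivative pd (\<lambda>p. ?W p \<bullet> nrm x) (1, 0) (s, x)) (at s)"
        unfolding f_def by (rule time_rd[OF smooth_diff[OF sF sx]])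
      moreover have "pd (\<lambda>p. ?W p \<bullet> nrm x) (1, 0) (s, x) = pd ?W (1, 0) (s, x) \<bullet> nrm x"
        by (rule pd_inner[OF smooth_diff[OF sw sx]])
      moreover have "pd ?W (1, 0) (s, x) \<bullet> nrm x = - lam * f s"
        using momb[OF s] presb[OF s x] unfolding f_def
        by (simp add: inner_commute inner_diff_right inner_add_right)
      ultimately show ?thesis by simp
    qed
    have f0: "f t0 = 0" using init[OF xc] un[OF t0T x] by (simp add: f_def)
    have "(\<lambda>s. f s * f s) t \<le> (\<lambda>s. f s * f s) t0"
    proof (rule DERIV_nonpos_imp_nonincreasing[of t0 t])
      show "t0 \<le> t" using t by simp
      fix s assume s: "t0 \<le> s" "s \<le> t"
      then have sT: "s \<in> {t0..T}" using t by simp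
      have "((\<lambda>s. f s * f s) has_real_derivative (- lam * f s) * f s + (- lam * f s) * f s) (at s)"
        using DERIV_mult[OF fd[OF sT] fd[OF sT]] by simp
      moreover have "(- lam * f s) * f s + (- lam * f s) * f s \<le> 0"
        using lam by (simp add: mult_nonneg_nonneg)
      ultimately show "\<exists>y. ((\<lambda>s. f s * f s) has_real_derivative y) (at s) \<and> y \<le> 0" by blast
    qed
    then have "f t * f t \<le> 0" using f0 by simp
    then have "f t = 0" by (simp add: mult_le_0_iff) (use not_square_less_zero in auto)
    then show ?thesis by (simp add: f_def)
  qed

  have wu: "w t x = u t x" if t: "t \<in> {t0..T}" and x: "x \<in> closure \<Omega>" for t x
  proof -
    obtain phi :: "'a \<Rightarrow> real" and Vp where ph: "open Vp" "closure \<Omega> \<subseteq> Vp" "smooth_on_set Vp phi"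
      "\<And>x. x \<in> \<Omega> \<Longrightarrow> lap phi x = divg (w t) x"
      "\<And>x. x \<in> frontier \<Omega> \<Longrightarrow> nrm x \<bullet> grad phi x = nrm x \<bullet> w t x"
      "\<And>x. x \<in> closure \<Omega> \<Longrightarrow> u t x = w t x - grad phi x"
      using ler[OF t] unfolding leray_proj_def by metis
    have "\<forall>x\<in>closure \<Omega>. grad phi x = 0"
    proof (rule neumann[OF oO bO cO neO sb ph(1) ph(2) ph(3)])
      fix x assume x: "x \<in> \<Omega>"
      show "lap phi x = 0" using ph(4)[OF x] tr_DW[OF o sw VO[OF t x]] DW0[OF t] x closure_subset by auto
    next
      fix x assume x: "x \<in> frontier \<Omega>"
      show "nrm x \<bullet> grad phi x = 0" using ph(5)[OF x] wn0[OF t x] by (simp add: inner_commute)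
    qed
    then show ?thesis using ph(6)[OF x] x by simp
  qed

  have ins: "INSE_noslip \<Omega> \<nu> g t0 T u q"
    unfolding INSE_noslip_def
  proof (rule ballI)
    fix t assume t: "t \<in> {t0..T}"
    show "(\<forall>x\<in>\<Omega>. dt t0 T u t x + conv (u t) (u t) x = g t x - grad (q t) x + \<nu> *\<^sub>R lap (u t) x) \<and>
        (\<forall>x\<in>\<Omega>. divg (u t) x = 0) \<and> (\<forall>x\<in>frontier \<Omega>. u t x = 0)"
    proof (intro conjI)
    show "\<forall>x\<in>\<Omega>. dt t0 T u t x + conv (u t) (u t) x = g t x - grad (q t) x + \<nu> *\<^sub>R lap (u t) x"
    proof
      fix x assume x: "x \<in> \<Omega>"
      have tx: "(t, x) \<in> V" using VO[OF t x] .
      have xc: "x \<in> closure \<Omega>" using x closure_subset by blast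
      have "dt t0 T u t x = dt t0 T w t x"
      proof -
        have "((\<lambda>s. ?W (s, x)) has_vector_derivative pd ?W (1, 0) (t, x)) (at t within {t0..T})"
          by (rule has_vector_derivative_at_within, rule time_vd[OF smooth_diff[OF sw tx]])
        then have "((\<lambda>s. u s x) has_vector_derivative pd ?W (1, 0) (t, x)) (at t within {t0..T})"
          by (rule has_vector_derivative_transform[OF t, rotated]) (use wu xc in simp)
        then have "dt t0 T u t x = pd ?W (1, 0) (t, x)"
          unfolding dt_def by (rule vector_derivative_within_closed_interval[OF tT t])
        also have "\<dots> = dt t0 T w t x" by (rule tr_dt[OF o sw tT t tx, symmetric])
        finally show ?thesis .
      qed
      moreover have "lap (u t) x = lap (w t) x"
      proof (rule lap_cong[OF oO x])
        fix y assume y: "y \<in> \<Omega>"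
        have "y \<in> closure \<Omega>" using y closure_subset by blast
        then show "u t y = w t y" using wu[OF t] by simp
        show "w t differentiable (at y)" by (rule tr_diff[OF o sw VO[OF t y]])
      next
        fix i :: 'a
        show "(\<lambda>y. dirD (w t) y i) differentiable (at x)" by (rule tr_dirD_diff[OF o sw tx])
      qed
      ultimately show "dt t0 T u t x + conv (u t) (u t) x = g t x - grad (q t) x + \<nu> *\<^sub>R lap (u t) x"
        using mom[OF t x] by simp
    qed
    show "\<forall>x\<in>\<Omega>. divg (u t) x = 0" using divu[OF t] by blast
    show "\<forall>x\<in>frontier \<Omega>. u t x = 0"
    proof
      fix x assume x: "x \<in> frontier \<Omega>"
      show "u t x = 0"
      proof (rule ccontr)
        assume ne: "u t x \<noteq> 0"
        define \<tau> where "\<tau> = (1 / norm (u t x)) *\<^sub>R u t x"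
        have "norm \<tau> = 1" using ne by (simp add: \<tau>_def)
        moreover have "\<tau> \<bullet> nrm x = 0" using un[OF t x] by (simp add: \<tau>_def)
        ultimately have "w t x \<bullet> \<tau> = 0" using tang[OF t x] by blast
        then have "u t x \<bullet> u t x = 0" using wu[OF t fc[OF x]] ne by (simp add: \<tau>_def)
        then show False using ne by simp
      qed
    qed
    qed
  qed
  show ?thesis using wu ins by blast
qed


lemma Ck_subset: "V' \<subseteq> V \<Longrightarrow> Ck k V f \<Longrightarrow> Ck k V' f"
proof (induction k arbitrary: f)
  case 0 then show ?case using continuous_on_subset by auto
next
  case (Suc k) then show ?case by auto
qed

lemma smooth_subset: "V' \<subseteq> V \<Longrightarrow> smooth_on_set V f \<Longrightarrow> smooth_on_set V' f"
  unfolding smooth_on_set_def using Ck_subset by blast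

lemma regular_obtain:
  assumes "regular_field t0 T \<Omega> f"
  obtains V where "open V" "{t0..T} \<times> closure \<Omega> \<subseteq> V" "smooth_on_set V (case_prod f)"
  using assms unfolding regular_field_def by auto

theorem theorem6:
  fixes \<Omega> :: "'a::euclidean_space set" and nrm :: "'a \<Rightarrow> 'a"
    and \<nu> lam t0 T :: real and g :: "real \<Rightarrow> 'a \<Rightarrow> 'a"
  assumes "open \<Omega>" "bounded \<Omega>" "connected \<Omega>" "\<Omega> \<noteq> {}"
    and "smooth_boundary_normal \<Omega> nrm"
    and "\<nu> > 0" "lam \<ge> 0" "t0 < T"
    and "regular_field t0 T \<Omega> g"
  shows "(\<forall>w u q. regular_field t0 T \<Omega> w \<and> regular_field t0 T \<Omega> u \<and> regular_field t0 T \<Omega> q \<and>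
            GePUP_E \<Omega> nrm \<nu> lam g t0 T w u q \<longrightarrow>
            (\<forall>t\<in>{t0..T}. \<forall>x\<in>closure \<Omega>. w t x = u t x) \<and> INSE_noslip \<Omega> \<nu> g t0 T u q)
       \<and> (\<forall>u p. regular_field t0 T \<Omega> u \<and> regular_field t0 T \<Omega> p \<and>
            INSE_noslip \<Omega> \<nu> g t0 T u p \<longrightarrow> GePUP_E \<Omega> nrm \<nu> lam g t0 T u u p)"
proof -
  obtain Vg where g: "open Vg" "{t0..T} \<times> closure \<Omega> \<subseteq> Vg" "smooth_on_set Vg (case_prod g)"
    using regular_obtain[OF assms(9)] by blast
  show ?thesis
  proof (rule conjI)
    show "\<forall>w u q. regular_field t0 T \<Omega> w \<and> regular_field t0 T \<Omega> u \<and> regular_field t0 T \<Omega> q \<and>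
            GePUP_E \<Omega> nrm \<nu> lam g t0 T w u q \<longrightarrow>
            (\<forall>t\<in>{t0..T}. \<forall>x\<in>closure \<Omega>. w t x = u t x) \<and> INSE_noslip \<Omega> \<nu> g t0 T u q"
    proof (intro allI impI)
    fix w u q
    assume a: "regular_field t0 T \<Omega> w \<and> regular_field t0 T \<Omega> u \<and> regular_field t0 T \<Omega> (q :: real \<Rightarrow> 'a \<Rightarrow> real) \<and>
            GePUP_E \<Omega> nrm \<nu> lam g t0 T w u q"
    obtain Vw where w: "open Vw" "{t0..T} \<times> closure \<Omega> \<subseteq> Vw" "smooth_on_set Vw (case_prod w)"
      using regular_obtain a by blast
    obtain Vu where u: "open Vu" "{t0..T} \<times> closure \<Omega> \<subseteq> Vu" "smooth_on_set Vu (case_prod u)"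
      using regular_obtain a by blast
    obtain Vq where q: "open Vq" "{t0..T} \<times> closure \<Omega> \<subseteq> Vq" "smooth_on_set Vq (case_prod q)"
      using regular_obtain a by blast
    define V where "V = Vg \<inter> Vw \<inter> Vu \<inter> Vq"
    have o: "open V" using g w u q by (simp add: V_def open_Int)
    have KV: "{t0..T} \<times> closure \<Omega> \<subseteq> V" using g w u q by (auto simp: V_def)
    show "(\<forall>t\<in>{t0..T}. \<forall>x\<in>closure \<Omega>. w t x = u t x) \<and> INSE_noslip \<Omega> \<nu> g t0 T u q"
      by (rule dir1[OF assms(1-8) o KV])
         (auto intro: smooth_subset[OF _ g(3)] smooth_subset[OF _ w(3)] smooth_subset[OF _ u(3)]
            smooth_subset[OF _ q(3)] simp: V_def a)
    qed
  next
    show "\<forall>u p. regular_field t0 T \<Omega> u \<and> regular_field t0 T \<Omega> p \<and>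
            INSE_noslip \<Omega> \<nu> g t0 T u p \<longrightarrow> GePUP_E \<Omega> nrm \<nu> lam g t0 T u u p"
    proof (intro allI impI)
    fix u p
    assume a: "regular_field t0 T \<Omega> u \<and> regular_field t0 T \<Omega> (p :: real \<Rightarrow> 'a \<Rightarrow> real) \<and> INSE_noslip \<Omega> \<nu> g t0 T u p"
    obtain Vu where u: "open Vu" "{t0..T} \<times> closure \<Omega> \<subseteq> Vu" "smooth_on_set Vu (case_prod u)"
      using regular_obtain a by blast
    obtain Vp where p: "open Vp" "{t0..T} \<times> closure \<Omega> \<subseteq> Vp" "smooth_on_set Vp (case_prod p)"
      using regular_obtain a by blast
    define V where "V = Vg \<inter> Vu \<inter> Vp"
    have o: "open V" using g u p by (simp add: V_def open_Int)
    have KV: "{t0..T} \<times> closure \<Omega> \<subseteq> V" using g u p by (auto simp: V_def)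
    show "GePUP_E \<Omega> nrm \<nu> lam g t0 T u u p"
      by (rule dir2[OF assms(1) assms(8) o KV])
         (auto intro: smooth_subset[OF _ g(3)] smooth_subset[OF _ u(3)] smooth_subset[OF _ p(3)] simp: V_def a)
    qed
  qed
qed


end
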